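(* Let $d\ge2$, let $\mathfrak{F}$ be an ordered field or a field that has more than two elements, and let $\mathcal{G}$ be a field-definable coordinate geometry over $\mathfrak{F}$ (of dimension $d$). Then $$\mathrm{Aut}(\mathcal{G})=\mathrm{AffAut}(\mathcal{G})\circ\mathrm{Aut}_{\mathrm{ind}}(\mathfrak{F})=\{A\circ\widetilde{\alpha}: A\in\mathrm{AffAut}(\mathcal{G}),\ \alpha\in\mathrm{Aut}(\mathfrak{F})\}.$$ Moreover, for each automorphism $g$ of $\mathcal{G}$, the decomposition $g=A\circ\widetilde{\alpha}$ with $A\in\mathrm{AffAut}(\mathcal{G})$ and $\widetilde{\alpha}\in\mathrm{Aut}_{\mathrm{ind}}(\mathfrak{F})$ is unique.
   Context: A field is $\langle F,+,\cdot,0,1\rangle$; an ordered field is $\langle F,+,\cdot,0,1,\le\rangle$. "Definable" means first-order definable without parameters. For points of $F^d$: ${\mathsf{Col}}(\vec p,\vec q,\vec r)$ iff $\vec q=\vec p+\lambda(\vec r-\vec p)$ for some $\lambda\in F$ or $\vec r=\vec p$; for an ordered field, ${\mathsf{Bw}}(\vec p,\vec q,\vec r)$ iff $\vec q=\vec p+\lambda(\vec r-\vec p)$ for some $\lambda\in F$ with $0\le\lambda\le1$. An $n$-ary relation on $F^d$ is definable over $\mathfrak{F}$ iff the corresponding $dn$-ary relation on $F$ obtained by listing coordinates of the $n$ points consecutively is definable in $\mathfrak{F}$. A coordinate geometry over a field (resp. ordered field) $\mathfrak{F}$ is a model with universe $F^d$, only relation symbols in its language, in which ${\mathsf{Col}}$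 (resp. ${\mathsf{Bw}}$) is definable; it is field-definable if all its relations are definable over $\mathfrak{F}$. An affine transformation of $F^d$ is an invertible linear map followed by a translation; $\mathrm{AffAut}(\mathcal{G})$ is the set of automorphisms of $\mathcal{G}$ that are affine transformations. For a map $f:F\to F$, $\widetilde f:F^d\to F^d$ is $\widetilde f(\langle p_1,\dots,p_d\rangle)=\langle f(p_1),\dots,f(p_d)\rangle$, and $\mathrm{Aut}_{\mathrm{ind}}(\mathfrak{F})=\{\widetilde\alpha:\alpha\in\mathrm{Aut}(\mathfrak{F})\}$. *)

theory Defs
  imports Main
begin

definition points :: "nat \<Rightarrow> 'a list set" where
  "points d = {p. length p = d}"

definition padd :: "'a::field list \<Rightarrow> 'a list \<Rightarrow> 'a list" where
  "padd p q = map2 (+) p q"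

definition psub :: "'a::field list \<Rightarrow> 'a list \<Rightarrow> 'a list" where
  "psub p q = map2 (-) p q"

definition psmult :: "'a::field \<Rightarrow> 'a list \<Rightarrow> 'a list" where
  "psmult c p = map (\<lambda>x. c * x) p"

definition Col :: "'a::field list \<Rightarrow> 'a list \<Rightarrow> 'a list \<Rightarrow> bool" where
  "Col p q r \<longleftrightarrow> (\<exists>c. q = padd p (psmult c (psub r p))) \<or> r = p"

definition Bw :: "('a::field \<Rightarrow> 'a \<Rightarrow> bool) \<Rightarrow> 'a list \<Rightarrow> 'a list \<Rightarrow> 'a list \<Rightarrow> bool" where
  "Bw le p q r \<longleftrightarrow> (\<exists>c. q = padd p (psmult c (psub r p)) \<and> le 0 c \<and> le c 1)"

definition ordered_field_rel :: "('a::field \<Rightarrow> 'a \<Rightarrow> bool) \<Rightarrow> bool" where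
  "ordered_field_rel le \<longleftrightarrow>
     (\<forall>x. le x x) \<and> (\<forall>x y. le x y \<and> le y x \<longrightarrow> x = y) \<and>
     (\<forall>x y z. le x y \<and> le y z \<longrightarrow> le x z) \<and> (\<forall>x y. le x y \<or> le y x) \<and>
     (\<forall>x y z. le x y \<longrightarrow> le (x + z) (y + z)) \<and>
     (\<forall>x y. le 0 x \<and> le 0 y \<longrightarrow> le 0 (x * y))"

text \<open>The field structure is the type 'a with +, *, 0, 1; the optional order
  le (Some r for an ordered field, None for a plain field) determines whether
  the symbol for the order is part of the language.\<close>

datatype fterm = FVar nat | FZero | FOne | FAdd fterm fterm | FMul fterm fterm

datatype fform = FEq fterm fterm | FLe fterm fterm | FNot fform
  | FConj fform fform | FEx nat fform

primrec feval :: "fterm \<Rightarrow> (nat \<Rightarrow> 'a::field) \<Rightarrow> 'a" where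
  "feval (FVar n) e = e n"
| "feval FZero e = 0"
| "feval FOne e = 1"
| "feval (FAdd s t) e = feval s e + feval t e"
| "feval (FMul s t) e = feval s e * feval t e"

primrec le_free :: "fform \<Rightarrow> bool" where
  "le_free (FEq s t) = True"
| "le_free (FLe s t) = False"
| "le_free (FNot \<phi>) = le_free \<phi>"
| "le_free (FConj \<phi> \<psi>) = (le_free \<phi> \<and> le_free \<psi>)"
| "le_free (FEx n \<phi>) = le_free \<phi>"

primrec fsat :: "('a::field \<Rightarrow> 'a \<Rightarrow> bool) option \<Rightarrow> fform \<Rightarrow> (nat \<Rightarrow> 'a) \<Rightarrow> bool" where
  "fsat le (FEq s t) e = (feval s e = feval t e)"
| "fsat le (FLe s t) e = (case le of Some r \<Rightarrow> r (feval s e) (feval t e) | None \<Rightarrow> False)"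
| "fsat le (FNot \<phi>) e = (\<not> fsat le \<phi> e)"
| "fsat le (FConj \<phi> \<psi>) e = (fsat le \<phi> e \<and> fsat le \<psi> e)"
| "fsat le (FEx n \<phi>) e = (\<exists>x. fsat le \<phi> (e(n := x)))"

definition fform_of :: "('a::field \<Rightarrow> 'a \<Rightarrow> bool) option \<Rightarrow> fform \<Rightarrow> bool" where
  "fform_of le \<phi> \<longleftrightarrow> (le = None \<longrightarrow> le_free \<phi>)"

definition field_definable_rel ::
  "('a::field \<Rightarrow> 'a \<Rightarrow> bool) option \<Rightarrow> nat \<Rightarrow> ('a list \<Rightarrow> bool) \<Rightarrow> bool" where
  "field_definable_rel le m R \<longleftrightarrow>
     (\<exists>\<phi>. fform_of le \<phi> \<and> (\<forall>e. fsat le \<phi> e \<longleftrightarrow> R (map e [0..<m])))"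

definition to_points :: "nat \<Rightarrow> nat \<Rightarrow> 'a list \<Rightarrow> 'a list list" where
  "to_points d n xs = map (\<lambda>k. take d (drop (k * d) xs)) [0..<n]"

text \<open>A geometry is given by a family of relation symbols of type 'i with arities
  arity i, interpreted by rel i on arity i -tuples (lists) of points.\<close>

datatype 'i rform = RRel 'i "nat list" | REq nat nat | RNot "'i rform"
  | RConj "'i rform" "'i rform" | REx nat "'i rform"

primrec rsat :: "nat \<Rightarrow> ('i \<Rightarrow> nat) \<Rightarrow> ('i \<Rightarrow> 'a list list \<Rightarrow> bool) \<Rightarrow> 'i rform
    \<Rightarrow> (nat \<Rightarrow> 'a list) \<Rightarrow> bool" where
  "rsat d ar rel (RRel i vs) e = (length vs = ar i \<and> rel i (map e vs))"
| "rsat d ar rel (REq m n) e = (e m = e n)"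
| "rsat d ar rel (RNot \<phi>) e = (\<not> rsat d ar rel \<phi> e)"
| "rsat d ar rel (RConj \<phi> \<psi>) e = (rsat d ar rel \<phi> e \<and> rsat d ar rel \<psi> e)"
| "rsat d ar rel (REx n \<phi>) e = (\<exists>p\<in>points d. rsat d ar rel \<phi> (e(n := p)))"

definition geom_definable3 :: "nat \<Rightarrow> ('i \<Rightarrow> nat) \<Rightarrow> ('i \<Rightarrow> 'a list list \<Rightarrow> bool)
    \<Rightarrow> ('a list \<Rightarrow> 'a list \<Rightarrow> 'a list \<Rightarrow> bool) \<Rightarrow> bool" where
  "geom_definable3 d ar rel T \<longleftrightarrow>
     (\<exists>\<phi>. \<forall>e. (\<forall>n. e n \<in> points d) \<longrightarrow> (rsat d ar rel \<phi> e \<longleftrightarrow> T (e 0) (e 1) (e 2)))"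

definition coord_geom :: "('a::field \<Rightarrow> 'a \<Rightarrow> bool) option \<Rightarrow> nat \<Rightarrow> ('i \<Rightarrow> nat)
    \<Rightarrow> ('i \<Rightarrow> 'a list list \<Rightarrow> bool) \<Rightarrow> bool" where
  "coord_geom le d ar rel \<longleftrightarrow>
     (case le of None \<Rightarrow> geom_definable3 d ar rel Col
               | Some r \<Rightarrow> geom_definable3 d ar rel (Bw r))"

definition field_definable_geom :: "('a::field \<Rightarrow> 'a \<Rightarrow> bool) option \<Rightarrow> nat \<Rightarrow> ('i \<Rightarrow> nat)
    \<Rightarrow> ('i \<Rightarrow> 'a list list \<Rightarrow> bool) \<Rightarrow> bool" where
  "field_definable_geom le d ar rel \<longleftrightarrow>
     (\<forall>i. field_definable_rel le (d * ar i) (\<lambda>xs. rel i (to_points d (ar i) xs)))"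

definition geom_aut :: "nat \<Rightarrow> ('i \<Rightarrow> nat) \<Rightarrow> ('i \<Rightarrow> 'a list list \<Rightarrow> bool)
    \<Rightarrow> ('a list \<Rightarrow> 'a list) \<Rightarrow> bool" where
  "geom_aut d ar rel g \<longleftrightarrow> bij_betw g (points d) (points d) \<and>
     (\<forall>i ps. length ps = ar i \<and> set ps \<subseteq> points d \<longrightarrow> (rel i ps \<longleftrightarrow> rel i (map g ps)))"

definition field_aut :: "('a::field \<Rightarrow> 'a \<Rightarrow> bool) option \<Rightarrow> ('a \<Rightarrow> 'a) \<Rightarrow> bool" where
  "field_aut le \<alpha> \<longleftrightarrow> bij \<alpha> \<and>
     (\<forall>x y. \<alpha> (x + y) = \<alpha> x + \<alpha> y) \<and> (\<forall>x y. \<alpha> (x * y) = \<alpha> x * \<alpha> y) \<and>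
     \<alpha> 0 = 0 \<and> \<alpha> 1 = 1 \<and>
     (\<forall>r. le = Some r \<longrightarrow> (\<forall>x y. r x y \<longleftrightarrow> r (\<alpha> x) (\<alpha> y)))"

definition ind_map :: "('a \<Rightarrow> 'a) \<Rightarrow> 'a list \<Rightarrow> 'a list" where
  "ind_map \<alpha> p = map \<alpha> p"

definition mat_vec :: "nat \<Rightarrow> (nat \<Rightarrow> nat \<Rightarrow> 'a::field) \<Rightarrow> 'a list \<Rightarrow> 'a list" where
  "mat_vec d M p = map (\<lambda>i. \<Sum>j<d. M i j * p ! j) [0..<d]"

definition invertible_mat :: "nat \<Rightarrow> (nat \<Rightarrow> nat \<Rightarrow> 'a::field) \<Rightarrow> bool" where
  "invertible_mat d M \<longleftrightarrow> (\<exists>N. \<forall>i<d. \<forall>j<d.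
      (\<Sum>k<d. N i k * M k j) = (if i = j then 1 else 0) \<and>
      (\<Sum>k<d. M i k * N k j) = (if i = j then 1 else 0))"

definition affine_transf :: "nat \<Rightarrow> ('a::field list \<Rightarrow> 'a list) \<Rightarrow> bool" where
  "affine_transf d A \<longleftrightarrow> (\<exists>M b. b \<in> points d \<and> invertible_mat d M \<and>
      (\<forall>p\<in>points d. A p = padd (mat_vec d M p) b))"

definition aff_aut :: "nat \<Rightarrow> ('i \<Rightarrow> nat) \<Rightarrow> ('i \<Rightarrow> 'a::field list list \<Rightarrow> bool)
    \<Rightarrow> ('a list \<Rightarrow> 'a list) \<Rightarrow> bool" where
  "aff_aut d ar rel A \<longleftrightarrow> affine_transf d A \<and> geom_aut d ar rel A"

end

theory Submission
  imports Defs
begin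

lemma in_points[simp]: "p \<in> points d \<longleftrightarrow> length p = d"
  by (simp add: points_def)

lemma length_padd[simp]: "length (padd p q) = min (length p) (length q)"
  by (simp add: padd_def)
lemma length_psub[simp]: "length (psub p q) = min (length p) (length q)"
  by (simp add: psub_def)
lemma length_psmult[simp]: "length (psmult c p) = length p"
  by (simp add: psmult_def)
lemma nth_padd[simp]: "i < length p \<Longrightarrow> i < length q \<Longrightarrow> padd p q ! i = p!i + q!i"
  by (simp add: padd_def)
lemma nth_psub[simp]: "i < length p \<Longrightarrow> i < length q \<Longrightarrow> psub p q ! i = p!i - q!i"
  by (simp add: psub_def)
lemma nth_psmult[simp]: "i < length p \<Longrightarrow> psmult c p ! i = c * p!i"
  by (simp add: psmult_def)

definition zv :: "nat \<Rightarrow> 'a::field list" where "zv d = replicate d 0"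
definition unitv :: "nat \<Rightarrow> nat \<Rightarrow> 'a::field list" where
  "unitv d j = map (\<lambda>i. if i = j then 1 else 0) [0..<d]"

lemma length_zv[simp]: "length (zv d) = d" by (simp add: zv_def)
lemma nth_zv[simp]: "i < d \<Longrightarrow> zv d ! i = 0" by (simp add: zv_def)
lemma length_unitv[simp]: "length (unitv d j) = d" by (simp add: unitv_def)
lemma nth_unitv[simp]: "i < d \<Longrightarrow> unitv d j ! i = (if i = j then 1 else 0)"
  by (simp add: unitv_def)

lemma list_eqI: "length x = d \<Longrightarrow> length y = d \<Longrightarrow> (\<And>i. i < d \<Longrightarrow> x!i = y!i) \<Longrightarrow> x = y"
  by (metis nth_equalityI)

lemma list_eqD: "x = y \<Longrightarrow> x ! i = y ! i" by simp

definition indep :: "nat \<Rightarrow> 'a::field list \<Rightarrow> 'a list \<Rightarrow> bool" where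
  "indep d u v \<longleftrightarrow> (\<forall>s t. padd (psmult s u) (psmult t v) = zv d \<longrightarrow> s = 0 \<and> t = 0)"

lemma indep_coeff:
  assumes "indep d u v" "length u = d" "length v = d"
    and "\<forall>i<d. s * u!i + t * v!i = s' * u!i + t' * v!i"
  shows "s = s' \<and> t = t'"
proof -
  have "padd (psmult (s - s') u) (psmult (t - t') v) = zv d"
    by (rule list_eqI[of _ d]) (use assms in \<open>auto simp: algebra_simps\<close>)
  with assms(1) show ?thesis unfolding indep_def by fastforce
qed

lemma indep_sym: "indep d u v \<Longrightarrow> length u = d \<Longrightarrow> length v = d \<Longrightarrow> indep d v u"
  unfolding indep_def
proof (intro allI impI)
  fix s t assume H: "\<forall>s t. padd (psmult s u) (psmult t v) = zv d \<longrightarrow> s = 0 \<and> t = 0"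
    and L: "length u = d" "length v = d" and E: "padd (psmult s v) (psmult t u) = zv d"
  have "padd (psmult t u) (psmult s v) = zv d"
    proof (rule list_eqI[of _ d])
    fix i assume "i < d"
    thus "padd (psmult t u) (psmult s v) ! i = zv d ! i"
      using arg_cong[OF E, of "\<lambda>x. x!i"] L by (simp add: algebra_simps)
  qed (use L in auto)
  with H show "s = 0 \<and> t = 0" by blast
qed

lemma Col_iff:
  "Col p q r \<longleftrightarrow> (\<exists>c. q = padd p (psmult c (psub r p))) \<or> r = p"
  by (simp add: Col_def)

lemma NC_indep:
  assumes L: "length a = d" "length b = d" "length c = d"
  shows "\<not> Col a b c \<longleftrightarrow> indep d (psub b a) (psub c a)"
proof
  assume nc: "\<not> Col a b c"
  hence ca: "c \<noteq> a" by (auto simp: Col_def)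
  show "indep d (psub b a) (psub c a)" unfolding indep_def
  proof (intro allI impI)
    fix s t assume E: "padd (psmult s (psub b a)) (psmult t (psub c a)) = zv d"
    have Ei: "s * (b!i - a!i) + t * (c!i - a!i) = 0" if "i < d" for i
      using arg_cong[OF E, of "\<lambda>x. x!i"] L that by simp
    have s0: "s = 0"
    proof (rule ccontr)
      assume "s \<noteq> 0"
      have "b = padd a (psmult (- t / s) (psub c a))"
      proof (rule list_eqI[of _ d])
        fix i assume "i < d"
        from Ei[OF this] \<open>s \<noteq> 0\<close> have "b!i = a!i + (- t / s) * (c!i - a!i)"
          by (simp add: field_simps)
        thus "b!i = padd a (psmult (- t / s) (psub c a)) ! i" using L \<open>i<d\<close> by simp
      qed (use L in auto)
      hence "Col a b c" by (auto simp: Col_def)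
      with nc show False by simp
    qed
    have t0: "t = 0"
    proof (rule ccontr)
      assume "t \<noteq> 0"
      have "c = a"
      proof (rule list_eqI[of _ d])
        fix i assume "i < d"
        from Ei[OF this] s0 \<open>t\<noteq>0\<close> show "c!i = a!i" by simp
      qed (use L in auto)
      with ca show False by simp
    qed
    show "s = 0 \<and> t = 0" using s0 t0 by simp
  qed
next
  assume I: "indep d (psub b a) (psub c a)"
  show "\<not> Col a b c"
  proof
    assume "Col a b c"
    then consider (l) lam where "b = padd a (psmult lam (psub c a))" | (e) "c = a"
      by (auto simp: Col_def)
    thus False
    proof cases
      case l
      have "padd (psmult 1 (psub b a)) (psmult (- lam) (psub c a)) = zv d"
        by (rule list_eqI[of _ d]) (use L l in auto)
      with I show False unfolding indep_def by (metis zero_neq_one)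
    next
      case e
      have "padd (psmult 0 (psub b a)) (psmult 1 (psub c a)) = zv d"
        by (rule list_eqI[of _ d]) (use L e in auto)
      with I show False unfolding indep_def by (metis zero_neq_one)
    qed
  qed
qed

lemma Col_comp:
  assumes "length p = d" "length q = d" "length r = d"
  shows "Col p q r \<longleftrightarrow> (\<exists>c. \<forall>i<d. q!i = p!i + c * (r!i - p!i)) \<or> r = p"
proof -
  have "q = padd p (psmult c (psub r p)) \<longleftrightarrow> (\<forall>i<d. q!i = p!i + c * (r!i - p!i))" for c
  proof
    assume "q = padd p (psmult c (psub r p))" thus "\<forall>i<d. q!i = p!i + c * (r!i - p!i)"
      using assms by simp
  next
    assume "\<forall>i<d. q!i = p!i + c * (r!i - p!i)" thus "q = padd p (psmult c (psub r p))"
      by (intro list_eqI[of _ d]) (use assms in auto)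
  qed
  thus ?thesis by (simp add: Col_def)
qed

lemma Col_line:
  assumes "length p = d" "length q = d" "length r = d" "r \<noteq> p"
  shows "Col p q r \<longleftrightarrow> (\<exists>c. \<forall>i<d. q!i = p!i + c * (r!i - p!i))"
  using Col_comp[OF assms(1-3)] assms(4) by simp

definition mkp :: "nat \<Rightarrow> (nat \<Rightarrow> 'a) \<Rightarrow> 'a list" where "mkp d f = map f [0..<d]"
lemma length_mkp[simp]: "length (mkp d f) = d" by (simp add: mkp_def)
lemma nth_mkp[simp]: "i < d \<Longrightarrow> mkp d f ! i = f i" by (simp add: mkp_def)

lemma NC_facts:
  assumes "length a = d" "length b = d" "length c = d" "\<not> Col a b c"
  shows "b \<noteq> a" "c \<noteq> a" "indep d (psub b a) (psub c a)"
proof -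
  show "c \<noteq> a" using assms(4) by (auto simp: Col_def)
  show "indep d (psub b a) (psub c a)" using assms NC_indep by blast
  have "Col a a c" by (subst Col_comp[of _ d]) (use assms in \<open>auto intro!: exI[of _ 0]\<close>)
  thus "b \<noteq> a" using assms(4) by auto
qed

lemma NC_coeff:
  assumes L: "length a = d" "length b = d" "length c = d" and nc: "\<not> Col a b c"
    and E: "\<forall>i<d. s * (b!i - a!i) + t * (c!i - a!i) = s' * (b!i - a!i) + t' * (c!i - a!i)"
  shows "s = s' \<and> t = t'"
  by (rule indep_coeff[OF NC_facts(3)[OF L nc]]) (use L E in auto)

definition Pl :: "nat \<Rightarrow> 'a::field list \<Rightarrow> 'a list \<Rightarrow> 'a list \<Rightarrow> 'a list \<Rightarrow> bool" where
  "Pl d a b c x \<longleftrightarrow> (\<exists>y\<in>points d. \<exists>z\<in>points d. Col a y b \<and> Col a z c \<and> y \<noteq> z \<and> Col y x z)"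

definition PP :: "nat \<Rightarrow> 'a::field list \<Rightarrow> 'a list \<Rightarrow> 'a list \<Rightarrow> 'a list \<Rightarrow> bool" where
  "PP d a b c e \<longleftrightarrow> Pl d a b c e \<and> \<not> (\<exists>x\<in>points d. Col a x b \<and> Col c x e)"

lemma Pl_iff:
  assumes L: "length (a::'a::field list) = d" "length b = d" "length c = d" "length x = d" and nc: "\<not> Col a b c"
    and r0: "r0 \<noteq> 0" "r0 \<noteq> (1::'a)"
  shows "Pl d a b c x \<longleftrightarrow> (\<exists>s t. \<forall>i<d. x!i = a!i + s * (b!i - a!i) + t * (c!i - a!i))"
proof
  assume "Pl d a b c x"
  then obtain y z where yz: "length y = d" "length z = d" "Col a y b" "Col a z c" "y \<noteq> z" "Col y x z"
    by (auto simp: Pl_def)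
  from NC_facts[OF L(1-3) nc] have ba: "b \<noteq> a" and ca: "c \<noteq> a" by auto
  obtain p where p: "\<forall>i<d. y!i = a!i + p * (b!i - a!i)" using Col_line[OF L(1) yz(1) L(2) ba] yz(3) by auto
  obtain q where q: "\<forall>i<d. z!i = a!i + q * (c!i - a!i)" using Col_line[OF L(1) yz(2) L(3) ca] yz(4) by auto
  obtain r where r: "\<forall>i<d. x!i = y!i + r * (z!i - y!i)" using Col_line[OF yz(1) L(4) yz(2)] yz(5,6) by auto
  have "\<forall>i<d. x!i = a!i + (p * (1 - r)) * (b!i - a!i) + (r * q) * (c!i - a!i)"
  proof (intro allI impI)
    fix i assume i: "i < d"
    have xi: "x!i = y!i + r * (z!i - y!i)" and yi: "y!i = a!i + p * (b!i - a!i)"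
      and zi: "z!i = a!i + q * (c!i - a!i)" using p q r i by auto
    show "x!i = a!i + (p * (1 - r)) * (b!i - a!i) + (r * q) * (c!i - a!i)"
      by (simp only: xi yi zi) (simp add: algebra_simps)
  qed
  thus "\<exists>s t. \<forall>i<d. x!i = a!i + s * (b!i - a!i) + t * (c!i - a!i)" by blast
next
  assume "\<exists>s t. \<forall>i<d. x!i = a!i + s * (b!i - a!i) + t * (c!i - a!i)"
  then obtain s t where st: "\<forall>i<d. x!i = a!i + s * (b!i - a!i) + t * (c!i - a!i)" by blast
  have key: "Pl d a b c x" if "\<forall>i<d. x!i = y!i + r * (z!i - y!i)"
      "\<forall>i<d. y!i = a!i + p * (b!i - a!i)" "\<forall>i<d. z!i = a!i + q * (c!i - a!i)"
      "p \<noteq> 0 \<or> q \<noteq> 0" "length y = d" "length z = d" for y z r p q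
  proof -
    have "Col a y b" using that(2,5) L by (auto simp: Col_comp)
    moreover have "Col a z c" using that(3,6) L by (auto simp: Col_comp)
    moreover have "Col y x z" using that(1,5,6) L by (auto simp: Col_comp)
    moreover have "y \<noteq> z"
    proof
      assume "y = z"
      hence "\<forall>i<d. p * (b!i - a!i) + 0 * (c!i - a!i) = 0 * (b!i - a!i) + q * (c!i - a!i)"
      proof (intro allI impI)
        fix i assume i: "i < d"
        have e1: "y!i = a!i + p * (b!i - a!i)" using that(2) i by simp
        have e2: "y!i = a!i + q * (c!i - a!i)" using that(3) i \<open>y = z\<close> by simp
        from e1 e2 show "p * (b!i - a!i) + 0 * (c!i - a!i) = 0 * (b!i - a!i) + q * (c!i - a!i)" by simp
      qed
      from NC_coeff[OF L(1-3) nc this] that(4) show False by simp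
    qed
    ultimately show ?thesis using that(5,6) unfolding Pl_def by (metis in_points)
  qed
  have r1: "1 - r0 \<noteq> 0" using r0 by simp
  show "Pl d a b c x"
  proof (cases "t = 0")
    case True
    show ?thesis
    proof (rule key[where y="mkp d (\<lambda>i. a!i + s * (b!i - a!i))" and z=c and r=0 and p=s and q=1])
      show "\<forall>i<d. x!i = mkp d (\<lambda>i. a!i + s * (b!i - a!i)) ! i + 0 * (c!i - mkp d (\<lambda>i. a!i + s * (b!i - a!i)) ! i)"
        using st True by simp
    qed (use L in simp_all)
  next
    case t: False
    show ?thesis
    proof (cases "s = 0")
      case True
      show ?thesis
      proof (rule key[where y=b and z="mkp d (\<lambda>i. a!i + t * (c!i - a!i))" and r=1 and p=1 and q=t])
        show "\<forall>i<d. x!i = b ! i + 1 * (mkp d (\<lambda>i. a!i + t * (c!i - a!i)) ! i - b ! i)"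
          using st True by simp
      qed (use L in simp_all)
    next
      case False
      show ?thesis
      proof (rule key[where y="mkp d (\<lambda>i. a!i + (s / (1 - r0)) * (b!i - a!i))"
               and z="mkp d (\<lambda>i. a!i + (t / r0) * (c!i - a!i))" and r=r0 and p="s / (1 - r0)" and q="t / r0"])
        show "\<forall>i<d. x!i = mkp d (\<lambda>i. a!i + (s / (1 - r0)) * (b!i - a!i)) ! i + r0 *
           (mkp d (\<lambda>i. a!i + (t / r0) * (c!i - a!i)) ! i - mkp d (\<lambda>i. a!i + (s / (1 - r0)) * (b!i - a!i)) ! i)"
        proof (intro allI impI)
          fix i assume i: "i < d"
          have "x!i = a!i + s * (b!i - a!i) + t * (c!i - a!i)" using st i by simp
          thus "x!i = mkp d (\<lambda>i. a!i + (s / (1 - r0)) * (b!i - a!i)) ! i + r0 *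
           (mkp d (\<lambda>i. a!i + (t / r0) * (c!i - a!i)) ! i - mkp d (\<lambda>i. a!i + (s / (1 - r0)) * (b!i - a!i)) ! i)"
          proof -
            have gen: "\<And>P Q. (a!i + P * (b!i - a!i)) + r0 * ((a!i + Q * (c!i - a!i)) - (a!i + P * (b!i - a!i)))
                = a!i + ((1 - r0) * P) * (b!i - a!i) + (r0 * Q) * (c!i - a!i)"
              by (simp add: algebra_simps)
            have h1: "(1 - r0) * (s/(1-r0)) = s" using r1 by simp
            have h2: "r0 * (t/r0) = t" using r0 by simp
            show ?thesis using i gen[of "s/(1-r0)" "t/r0"] \<open>x!i = _\<close> unfolding h1 h2 by simp
          qed
        qed
      qed (use L t r0 in simp_all)
    qed
  qed
qed

lemma PP_iff:
  assumes L: "length (a::'a::field list) = d" "length b = d" "length c = d" "length e = d"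
    and nc: "\<not> Col a b c" and r0: "r0 \<noteq> 0" "r0 \<noteq> (1::'a)"
  shows "PP d a b c e \<longleftrightarrow> e \<noteq> c \<and> (\<exists>s. \<forall>i<d. e!i = c!i + s * (b!i - a!i))"
proof
  assume pp: "PP d a b c e"
  from NC_facts[OF L(1-3) nc] have ba: "b \<noteq> a" and ca: "c \<noteq> a" by auto
  from pp obtain s t where st: "\<forall>i<d. e!i = a!i + s * (b!i - a!i) + t * (c!i - a!i)"
    using Pl_iff[OF L nc r0] by (auto simp: PP_def)
  have nx: "\<not> (\<exists>x\<in>points d. Col a x b \<and> Col c x e)" using pp by (simp add: PP_def)
  have t1: "t = 1"
  proof (rule ccontr)
    assume t: "t \<noteq> 1"
    define lam where "lam = 1 / (1 - t)"
    have h: "lam * (t - 1) = -1" using t by (simp add: field_simps lam_def)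
    define x where "x = mkp d (\<lambda>i. a!i + (lam * s) * (b!i - a!i))"
    have "Col a x b" unfolding x_def by (subst Col_comp[of _ d]) (use L in \<open>auto intro!: exI[of _ "lam * s"]\<close>)
    moreover have "Col c x e"
    proof (subst Col_comp[of _ d])
      have "\<forall>i<d. x!i = c!i + lam * (e!i - c!i)"
      proof (intro allI impI)
        fix i assume i: "i < d"
        have ec: "e!i - c!i = s * (b!i - a!i) + (t - 1) * (c!i - a!i)" using st i by (simp add: algebra_simps)
        have "c!i + lam * (e!i - c!i) = c!i + (lam * s) * (b!i - a!i) + (lam * (t - 1)) * (c!i - a!i)"
          unfolding ec by (simp add: algebra_simps)
        also have "\<dots> = a!i + (lam * s) * (b!i - a!i)" by (simp only: h) (simp add: algebra_simps)
        finally show "x!i = c!i + lam * (e!i - c!i)" using i by (simp add: x_def)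
      qed
      thus "(\<exists>ca. \<forall>i<d. x!i = c!i + ca * (e!i - c!i)) \<or> e = c" by blast
    qed (use L x_def in auto)
    ultimately show False using nx L x_def by auto
  qed
  have "e \<noteq> c"
  proof
    assume "e = c"
    have "Col a a b" by (subst Col_comp[of _ d]) (use L in \<open>auto intro!: exI[of _ 0]\<close>)
    moreover have "Col c a e" using \<open>e = c\<close> by (simp add: Col_def)
    ultimately show False using nx L by auto
  qed
  moreover have "\<forall>i<d. e!i = c!i + s * (b!i - a!i)" using st t1 by (simp add: algebra_simps)
  ultimately show "e \<noteq> c \<and> (\<exists>s. \<forall>i<d. e!i = c!i + s * (b!i - a!i))" by blast
next
  assume "e \<noteq> c \<and> (\<exists>s. \<forall>i<d. e!i = c!i + s * (b!i - a!i))"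
  then obtain s where ec: "e \<noteq> c" and s: "\<forall>i<d. e!i = c!i + s * (b!i - a!i)" by blast
  from NC_facts[OF L(1-3) nc] have ba: "b \<noteq> a" and ca: "c \<noteq> a" by auto
  have "\<forall>i<d. e!i = a!i + s * (b!i - a!i) + 1 * (c!i - a!i)" using s by simp
  hence "Pl d a b c e" using Pl_iff[OF L nc r0] by blast
  moreover have "\<not> (\<exists>x\<in>points d. Col a x b \<and> Col c x e)"
  proof
    assume "\<exists>x\<in>points d. Col a x b \<and> Col c x e"
    then obtain x where x: "length x = d" "Col a x b" "Col c x e" by auto
    obtain p where p: "\<forall>i<d. x!i = a!i + p * (b!i - a!i)" using Col_line[OF L(1) x(1) L(2) ba] x(2) by auto
    obtain l where l: "\<forall>i<d. x!i = c!i + l * (e!i - c!i)" using Col_line[OF L(3) x(1) L(4) ec] x(3) by auto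
    have "\<forall>i<d. p * (b!i - a!i) + 0 * (c!i - a!i) = (l * s) * (b!i - a!i) + 1 * (c!i - a!i)"
    proof (intro allI impI)
      fix i assume i: "i < d"
      have e1: "x!i = a!i + p * (b!i - a!i)" using p i by simp
      have e2: "x!i = c!i + l * (s * (b!i - a!i))" using l s i by simp
      from e1 e2 show "p * (b!i - a!i) + 0 * (c!i - a!i) = (l * s) * (b!i - a!i) + 1 * (c!i - a!i)"
        by (simp add: algebra_simps)
    qed
    from NC_coeff[OF L(1-3) nc this] show False by simp
  qed
  ultimately show "PP d a b c e" by (simp add: PP_def)
qed

lemma NC_swap23:
  assumes "length a = d" "length b = d" "length c = d" "\<not> Col a b c"
  shows "\<not> Col a c b"
  using assms NC_indep indep_sym by (metis length_psub min.idem)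

lemma exists_off_line:
  assumes d2: "2 \<le> d" and L: "length (a::'a::field list) = d" "length b = d" and ba: "b \<noteq> a"
  shows "\<exists>p. length p = d \<and> \<not> Col a b p"
proof -
  obtain i where i: "i < d" "b!i \<noteq> a!i" using ba L list_eqI[of b d a] by blast
  define j where "j = (if i = 0 then 1 else 0::nat)"
  have j: "j < d" "j \<noteq> i" using d2 by (auto simp: j_def)
  define p where "p = mkp d (\<lambda>k. a!k + (if k = j then 1 else 0))"
  have "\<not> Col a b p"
  proof
    assume "Col a b p"
    then consider (l) c where "\<forall>k<d. b!k = a!k + c * (p!k - a!k)" | (e) "p = a"
      using Col_comp[of a d b p] L by (auto simp: p_def)
    thus False
    proof cases
      case l
      from l i j show False by (auto simp: p_def)
    next
      case e
      from arg_cong[OF e, of "\<lambda>x. x!j"] j show False by (simp add: p_def)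
    qed
  qed
  thus ?thesis by (intro exI[of _ p]) (simp add: p_def)
qed

definition aff3 :: "nat \<Rightarrow> 'a::field list \<Rightarrow> 'a list \<Rightarrow> 'a list \<Rightarrow> 'a list" where
  "aff3 d a b c = mkp d (\<lambda>i. b!i + c!i - a!i)"

lemma length_aff3[simp]: "length (aff3 d a b c) = d" by (simp add: aff3_def)
lemma nth_aff3[simp]: "i < d \<Longrightarrow> aff3 d a b c ! i = b!i + c!i - a!i" by (simp add: aff3_def)

locale collin =
  fixes d :: nat and g :: "'a::field list \<Rightarrow> 'a list" and r0 :: 'a
  assumes d2: "2 \<le> d" and bij: "bij_betw g (points d) (points d)"
    and colp: "\<And>p q r. length p = d \<Longrightarrow> length q = d \<Longrightarrow> length r = d \<Longrightarrow>
        Col (g p) (g q) (g r) \<longleftrightarrow> Col p q r"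
    and r0: "r0 \<noteq> 0" "r0 \<noteq> 1"
begin

lemma glen[simp]: "length p = d \<Longrightarrow> length (g p) = d"
  using bij by (auto simp: bij_betw_def)

lemma ginj: "length p = d \<Longrightarrow> length q = d \<Longrightarrow> g p = g q \<longleftrightarrow> p = q"
  using bij by (auto simp: bij_betw_def inj_on_def)

lemma gsurj: assumes "length y = d" shows "\<exists>p. length p = d \<and> g p = y"
proof -
  have "y \<in> g ` points d" using bij assms by (simp add: bij_betw_def)
  then obtain p where "p \<in> points d" "y = g p" by blast
  thus ?thesis by auto
qed

lemma ex_g: "(\<exists>y\<in>points d. P y) \<longleftrightarrow> (\<exists>y\<in>points d. P (g y))"
proof
  assume "\<exists>y\<in>points d. P y"
  then obtain y where y: "length y = d" "P y" by auto
  obtain p where "length p = d" "g p = y" using gsurj[OF y(1)] by blast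
  thus "\<exists>y\<in>points d. P (g y)" using y by auto
next
  assume "\<exists>y\<in>points d. P (g y)"
  then obtain y where y: "length y = d" "P (g y)" by auto
  thus "\<exists>y\<in>points d. P y" by (intro bexI[of _ "g y"]) auto
qed

lemma Pl_pres:
  assumes "length a = d" "length b = d" "length c = d" "length x = d"
  shows "Pl d (g a) (g b) (g c) (g x) \<longleftrightarrow> Pl d a b c x"
proof -
  have "Pl d (g a) (g b) (g c) (g x) \<longleftrightarrow>
     (\<exists>y\<in>points d. \<exists>z\<in>points d. Col (g a) (g y) (g b) \<and> Col (g a) (g z) (g c) \<and> g y \<noteq> g z \<and> Col (g y) (g x) (g z))"
    unfolding Pl_def by (subst ex_g) (subst ex_g, rule refl)
  also have "\<dots> \<longleftrightarrow> Pl d a b c x"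
    unfolding Pl_def using assms by (auto simp: colp ginj)
  finally show ?thesis .
qed

lemma PP_pres:
  assumes "length a = d" "length b = d" "length c = d" "length e = d"
  shows "PP d (g a) (g b) (g c) (g e) \<longleftrightarrow> PP d a b c e"
proof -
  have "(\<exists>x\<in>points d. Col (g a) x (g b) \<and> Col (g c) x (g e)) \<longleftrightarrow>
        (\<exists>x\<in>points d. Col (g a) (g x) (g b) \<and> Col (g c) (g x) (g e))"
    by (rule ex_g)
  also have "\<dots> \<longleftrightarrow> (\<exists>x\<in>points d. Col a x b \<and> Col c x e)"
    using assms by (auto simp: colp)
  finally show ?thesis unfolding PP_def using Pl_pres[OF assms] by simp
qed

lemma parallelogram:
  assumes L: "length a = d" "length b = d" "length c = d" and nc: "\<not> Col a b c"
  shows "g (aff3 d a b c) = aff3 d (g a) (g b) (g c)"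
proof -
  define e where "e = aff3 d a b c"
  have Le: "length e = d" by (simp add: e_def)
  from NC_facts[OF L nc] have ba: "b \<noteq> a" and ca: "c \<noteq> a" by auto
  have nc2: "\<not> Col a c b" using NC_swap23[OF L nc] .
  have ec: "e \<noteq> c"
  proof
    assume "e = c"
    have "b = a"
    proof (rule list_eqI[of _ d])
      fix i assume i: "i < d"
      have "e!i = c!i" using \<open>e = c\<close> by simp
      thus "b!i = a!i" using i by (simp add: e_def algebra_simps)
    qed (use L in auto)
    with ba show False by simp
  qed
  have eb: "e \<noteq> b"
  proof
    assume "e = b"
    have "c = a"
    proof (rule list_eqI[of _ d])
      fix i assume i: "i < d"
      have "e!i = b!i" using \<open>e = b\<close> by simp
      thus "c!i = a!i" using i by (simp add: e_def algebra_simps)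
    qed (use L in auto)
    with ca show False by simp
  qed
  have "PP d a b c e" using PP_iff[OF L Le nc r0] ec
    by (auto simp: e_def intro!: exI[of _ 1])
  hence P1: "PP d (g a) (g b) (g c) (g e)" using PP_pres[OF L Le] by simp
  have "PP d a c b e" using PP_iff[OF L(1,3,2) Le nc2 r0] eb
    by (auto simp: e_def intro!: exI[of _ 1])
  hence P2: "PP d (g a) (g c) (g b) (g e)" using PP_pres[OF L(1,3,2) Le] by simp
  have gL: "length (g a) = d" "length (g b) = d" "length (g c) = d" "length (g e) = d"
    using L Le by auto
  have gnc: "\<not> Col (g a) (g b) (g c)" using colp[OF L] nc by simp
  have gnc2: "\<not> Col (g a) (g c) (g b)" using NC_swap23[OF gL(1-3) gnc] .
  obtain s1 where s1: "\<forall>i<d. g e!i = g c!i + s1 * (g b!i - g a!i)"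
    using P1 PP_iff[OF gL gnc r0] by blast
  obtain s2 where s2: "\<forall>i<d. g e!i = g b!i + s2 * (g c!i - g a!i)"
    using P2 PP_iff[OF gL(1,3,2,4) gnc2 r0] by blast
  have "\<forall>i<d. s1 * (g b!i - g a!i) + 1 * (g c!i - g a!i) = 1 * (g b!i - g a!i) + s2 * (g c!i - g a!i)"
  proof (intro allI impI)
    fix i assume i: "i < d"
    have e1: "g e!i = g c!i + s1 * (g b!i - g a!i)" using s1 i by simp
    have e2: "g e!i = g b!i + s2 * (g c!i - g a!i)" using s2 i by simp
    from e1 e2 show "s1 * (g b!i - g a!i) + 1 * (g c!i - g a!i) = 1 * (g b!i - g a!i) + s2 * (g c!i - g a!i)"
      by (simp add: algebra_simps)
  qed
  from NC_coeff[OF gL(1-3) gnc this] have "s1 = 1" by simp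
  hence "g e = aff3 d (g a) (g b) (g c)"
    by (intro list_eqI[of _ d]) (use s1 gL in \<open>auto simp: algebra_simps\<close>)
  thus ?thesis by (simp add: e_def)
qed

lemma aff3_all:
  assumes L: "length a = d" "length b = d" "length c = d"
  shows "g (aff3 d a b c) = aff3 d (g a) (g b) (g c)"
proof -
  have gL: "length (g a) = d" "length (g b) = d" "length (g c) = d" using L by auto
  consider "b = a" | "c = a" | "b \<noteq> a" "c \<noteq> a" "\<not> Col a b c" | "b \<noteq> a" "c \<noteq> a" "Col a b c" by blast
  thus ?thesis
  proof cases
    case 1
    have "aff3 d a b c = c" by (rule list_eqI[of _ d]) (use L 1 in auto)
    moreover have "aff3 d (g a) (g b) (g c) = g c" by (rule list_eqI[of _ d]) (use gL 1 in auto)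
    ultimately show ?thesis by simp
  next
    case 2
    have "aff3 d a b c = b" by (rule list_eqI[of _ d]) (use L 2 in auto)
    moreover have "aff3 d (g a) (g b) (g c) = g b" by (rule list_eqI[of _ d]) (use gL 2 in auto)
    ultimately show ?thesis by simp
  next
    case 3
    thus ?thesis using parallelogram[OF L] by simp
  next
    case 4
    obtain p where p: "length p = d" "\<not> Col a b p" using exists_off_line[OF d2 L(1,2) 4(1)] by blast
    define q where "q = aff3 d a b p"
    have Lq: "length q = d" by (simp add: q_def)
    have gq: "g q = aff3 d (g a) (g b) (g p)" using parallelogram[OF L(1,2) p(1,2)] by (simp add: q_def)
    have "Col a c b" using 4(3) NC_swap23[OF L(1,3,2)] by blast
    then obtain mu where mu: "\<forall>i<d. c!i = a!i + mu * (b!i - a!i)" using Col_line[OF L(1,3,2) 4(1)] by blast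
    have "indep d (psub q p) (psub c p)" unfolding indep_def
    proof (intro allI impI)
      fix s t assume E: "padd (psmult s (psub q p)) (psmult t (psub c p)) = zv d"
      have "\<forall>i<d. (s + t * mu) * (b!i - a!i) + (- t) * (p!i - a!i) = 0 * (b!i - a!i) + 0 * (p!i - a!i)"
      proof (intro allI impI)
        fix i assume i: "i < d"
        have "s * (q!i - p!i) + t * (c!i - p!i) = 0"
          using arg_cong[OF E, of "\<lambda>x. x!i"] i L p(1) Lq by simp
        moreover have "q!i = b!i + p!i - a!i" using i by (simp add: q_def)
        moreover have "c!i = a!i + mu * (b!i - a!i)" using mu i by simp
        ultimately show "(s + t * mu) * (b!i - a!i) + (- t) * (p!i - a!i) = 0 * (b!i - a!i) + 0 * (p!i - a!i)"
          by (simp add: algebra_simps)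
      qed
      from NC_coeff[OF L(1,2) p(1,2) this] show "s = 0 \<and> t = 0" by auto
    qed
    hence ncp: "\<not> Col p q c" using NC_indep[OF p(1) Lq L(3)] by simp
    have e1: "aff3 d p q c = aff3 d a b c"
      by (rule list_eqI[of _ d]) (auto simp: q_def)
    have "g (aff3 d p q c) = aff3 d (g p) (g q) (g c)" using parallelogram[OF p(1) Lq L(3) ncp] .
    also have "\<dots> = aff3 d (g a) (g b) (g c)"
      by (rule list_eqI[of _ d]) (auto simp: gq)
    finally show ?thesis using e1 by simp
  qed
qed

end

lemma transl_eq: "((x::'a::field) - z = y - z + c * ((w - z) - (y - z))) \<longleftrightarrow> (x = y + c * (w - y))"
  by (simp add: algebra_simps)

lemma Col_transl:
  assumes "length p = d" "length q = d" "length r = d" "length t = d"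
  shows "Col (psub p t) (psub q t) (psub r t) \<longleftrightarrow> Col p q r"
proof -
  have e: "psub r t = psub p t \<longleftrightarrow> r = p"
  proof
    assume H: "psub r t = psub p t"
    show "r = p"
    proof (rule list_eqI[of _ d])
      fix i assume i: "i < d"
      show "r!i = p!i" using arg_cong[OF H, of "\<lambda>x. x!i"] i assms by simp
    qed (use assms in auto)
  qed simp
  have "(psub q t!i = psub p t!i + c * (psub r t!i - psub p t!i)) \<longleftrightarrow> (q!i = p!i + c * (r!i - p!i))"
    if i: "i < d" for i c
  proof -
    have "psub q t!i = q!i - t!i" "psub p t!i = p!i - t!i" "psub r t!i = r!i - t!i" using i assms by auto
    thus ?thesis by (simp only: transl_eq)
  qed
  hence "(\<exists>c. \<forall>i<d. psub q t!i = psub p t!i + c * (psub r t!i - psub p t!i)) \<longleftrightarrow>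
        (\<exists>c. \<forall>i<d. q!i = p!i + c * (r!i - p!i))" by simp
  thus ?thesis using e Col_comp[OF assms(1-3)] Col_comp[of "psub p t" d "psub q t" "psub r t"] assms by simp
qed

lemma NC0:
  assumes "length v = d" "length w = d"
  shows "\<not> Col (zv d) v w \<longleftrightarrow> indep d v w"
proof -
  have "psub v (zv d) = v" "psub w (zv d) = w"
    by (rule list_eqI[of _ d]; use assms in simp)+
  thus ?thesis using NC_indep[of "zv d" d v w] assms by simp
qed

lemma smult_cancel:
  assumes "length w = d" "w \<noteq> zv d" "psmult m w = psmult m' w"
  shows "m = m'"
proof -
  obtain i where i: "i < d" "w!i \<noteq> 0" using assms(1,2) list_eqI[of w d "zv d"] by auto
  from arg_cong[OF assms(3), of "\<lambda>x. x!i"] i assms(1) show ?thesis by simp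
qed

lemma unitv_nz: "j < d \<Longrightarrow> unitv d j \<noteq> (zv d :: 'a::field list)"
proof
  assume "j < d" "unitv d j = (zv d :: 'a list)"
  from arg_cong[OF this(2), of "\<lambda>x. x!j"] this(1) show False by simp
qed

context collin
begin

definition h :: "'a list \<Rightarrow> 'a list" where "h x = psub (g x) (g (zv d))"

lemma hlen[simp]: "length x = d \<Longrightarrow> length (h x) = d" by (simp add: h_def)

lemma h0[simp]: "h (zv d) = zv d"
  by (rule list_eqI[of _ d]) (auto simp: h_def)

lemma hadd: assumes "length x = d" "length y = d" shows "h (padd x y) = padd (h x) (h y)"
proof -
  have "padd x y = aff3 d (zv d) x y" by (rule list_eqI[of _ d]) (use assms in auto)
  hence "g (padd x y) = aff3 d (g (zv d)) (g x) (g y)" using aff3_all[of "zv d" x y] assms by simp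
  thus ?thesis by (intro list_eqI[of _ d]) (use assms in \<open>auto simp: h_def\<close>)
qed

lemma hinj: assumes "length x = d" "length y = d" shows "h x = h y \<longleftrightarrow> x = y"
proof
  assume H: "h x = h y"
  have "g x = g y"
  proof (rule list_eqI[of _ d])
    fix i assume i: "i < d"
    show "g x!i = g y!i" using arg_cong[OF H, of "\<lambda>x. x!i"] i assms by (simp add: h_def)
  qed (use assms in auto)
  thus "x = y" using ginj assms by simp
qed simp

lemma hsurj: assumes "length y = d" shows "\<exists>p. length p = d \<and> h p = y"
proof -
  obtain p where p: "length p = d" "g p = padd y (g (zv d))" using gsurj[of "padd y (g (zv d))"] assms by auto
  have "h p = y" by (rule list_eqI[of _ d]) (use p assms in \<open>auto simp: h_def\<close>)
  thus ?thesis using p by blast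
qed

lemma hcol: assumes "length p = d" "length q = d" "length r = d"
  shows "Col (h p) (h q) (h r) \<longleftrightarrow> Col p q r"
  unfolding h_def using Col_transl[of "g p" d "g q" "g r" "g (zv d)"] colp[OF assms] assms by simp

lemma hnz: "length v = d \<Longrightarrow> v \<noteq> zv d \<Longrightarrow> h v \<noteq> zv d"
  using hinj[of v "zv d"] by simp

lemma scal_col:
  assumes v: "length v = d" "v \<noteq> zv d"
  shows "\<exists>m. h (psmult l v) = psmult m (h v)"
proof -
  have "Col (zv d) (psmult l v) v"
    by (subst Col_comp[of _ d]) (use v in \<open>auto intro!: exI[of _ l]\<close>)
  hence "Col (h (zv d)) (h (psmult l v)) (h v)" using hcol[of "zv d" "psmult l v" v] v by simp
  hence "Col (zv d) (h (psmult l v)) (h v)" by simp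
  then obtain m where m: "\<forall>i<d. h (psmult l v)!i = zv d!i + m * (h v!i - zv d!i)"
    using Col_line[of "zv d" d "h (psmult l v)" "h v"] v hnz[OF v] by auto
  have "h (psmult l v) = psmult m (h v)" by (rule list_eqI[of _ d]) (use m v in auto)
  thus ?thesis by blast
qed

lemma lin_same:
  assumes L: "length v = d" "length w = d" and nc: "\<not> Col (zv d) v w"
    and m: "h (psmult l v) = psmult m (h v)" and n: "h (psmult l w) = psmult n (h w)"
  shows "m = n"
proof -
  have I: "indep d v w" using NC0 L nc by blast
  have vw: "padd v w \<noteq> zv d"
  proof
    assume "padd v w = zv d"
    hence "padd (psmult 1 v) (psmult 1 w) = zv d" by (metis mult_1 psmult_def map_idI)
    with I show False unfolding indep_def by (metis zero_neq_one)
  qed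
  obtain k where k: "h (psmult l (padd v w)) = psmult k (h (padd v w))"
    using scal_col[of "padd v w"] vw L by auto
  have "psmult l (padd v w) = padd (psmult l v) (psmult l w)"
    by (rule list_eqI[of _ d]) (use L in \<open>auto simp: algebra_simps\<close>)
  hence "h (psmult l (padd v w)) = padd (psmult m (h v)) (psmult n (h w))"
    using hadd[of "psmult l v" "psmult l w"] L m n by simp
  with k have E: "psmult k (padd (h v) (h w)) = padd (psmult m (h v)) (psmult n (h w))"
    using hadd[OF L] by simp
  have "\<not> Col (h (zv d)) (h v) (h w)" using hcol[of "zv d" v w] L nc by simp
  hence I2: "indep d (h v) (h w)" using NC0[of "h v" d "h w"] L by simp
  have "\<forall>i<d. m * h v!i + n * h w!i = k * h v!i + k * h w!i"
  proof (intro allI impI)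
    fix i assume i: "i < d"
    show "m * h v!i + n * h w!i = k * h v!i + k * h w!i"
      using arg_cong[OF E, of "\<lambda>x. x!i"] i L by (simp add: algebra_simps)
  qed
  from indep_coeff[OF I2 _ _ this] L show ?thesis by simp
qed

definition alpha :: "'a \<Rightarrow> 'a" where
  "alpha l = (THE m. h (psmult l (unitv d 0)) = psmult m (h (unitv d 0)))"

lemma d0: "0 < d" and d1: "1 < d" using d2 by auto

lemma he0nz: "h (unitv d 0) \<noteq> zv d" using hnz[of "unitv d 0"] unitv_nz[OF d0] by simp

lemma alpha_e0: "h (psmult l (unitv d 0)) = psmult (alpha l) (h (unitv d 0))"
proof -
  obtain m where m: "h (psmult l (unitv d 0)) = psmult m (h (unitv d 0))"
    using scal_col[of "unitv d 0" l] unitv_nz[OF d0] by auto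
  have "alpha l = m" unfolding alpha_def
  proof (rule the_equality)
    fix m' assume "h (psmult l (unitv d 0)) = psmult m' (h (unitv d 0))"
    with m show "m' = m" using smult_cancel[of "h (unitv d 0)" d m' m] he0nz by simp
  qed (rule m)
  thus ?thesis using m by simp
qed

lemma indep_e01: "indep d (unitv d 0 :: 'a list) (unitv d 1)"
  unfolding indep_def
proof (intro allI impI)
  fix s t :: 'a assume E: "padd (psmult s (unitv d 0)) (psmult t (unitv d 1)) = zv d"
  from arg_cong[OF E, of "\<lambda>x. x!0"] arg_cong[OF E, of "\<lambda>x. x!1"] d0 d1
  show "s = 0 \<and> t = 0" by simp
qed

lemma hsmult:
  assumes v: "length v = d"
  shows "h (psmult l v) = psmult (alpha l) (h v)"
proof (cases "v = zv d")
  case True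
  have "psmult l v = zv d" by (rule list_eqI[of _ d]) (use True in auto)
  moreover have "psmult (alpha l) (h v) = zv d" by (rule list_eqI[of _ d]) (use True in auto)
  ultimately show ?thesis by simp
next
  case False
  obtain m where m: "h (psmult l v) = psmult m (h v)" using scal_col[OF v False] by blast
  obtain m1 where m1: "h (psmult l (unitv d 1)) = psmult m1 (h (unitv d 1))"
    using scal_col[of "unitv d 1" l] unitv_nz[OF d1] by auto
  have "\<not> Col (zv d) (unitv d 0 :: 'a list) (unitv d 1)" using NC0[of "unitv d 0 :: 'a list" d "unitv d 1"] indep_e01 by simp
  hence m1a: "m1 = alpha l" using lin_same[of "unitv d 0" "unitv d 1" l "alpha l" m1] alpha_e0 m1 by simp
  show ?thesis
  proof (cases "Col (zv d) v (unitv d 0)")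
    case False
    hence "m = alpha l" using lin_same[of v "unitv d 0" l m "alpha l"] alpha_e0 m v by simp
    thus ?thesis using m by simp
  next
    case True
    then obtain c where c: "\<forall>i<d. v!i = zv d!i + c * (unitv d 0!i - zv d!i)"
      using Col_line[of "zv d" d v "unitv d 0"] v unitv_nz[OF d0] by auto
    have c0: "c \<noteq> 0"
    proof
      assume "c = 0"
      hence "v = zv d" by (intro list_eqI[of _ d]) (use c v in auto)
      with False show False by simp
    qed
    have "indep d v (unitv d 1)" unfolding indep_def
    proof (intro allI impI)
      fix s t :: 'a assume E: "padd (psmult s v) (psmult t (unitv d 1)) = zv d"
      from arg_cong[OF E, of "\<lambda>x. x!0"] arg_cong[OF E, of "\<lambda>x. x!1"] d0 d1 c v c0
      show "s = 0 \<and> t = 0" by simp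
    qed
    hence "\<not> Col (zv d) v (unitv d 1)" using NC0[of v d "unitv d 1"] v by simp
    hence "m = m1" using lin_same[of v "unitv d 1" l m m1] m m1 v by simp
    thus ?thesis using m m1a by simp
  qed
qed

lemma alpha_add: "alpha (x + y) = alpha x + alpha y"
proof -
  let ?e = "unitv d 0 :: 'a list"
  have "psmult (x + y) ?e = padd (psmult x ?e) (psmult y ?e)"
    by (rule list_eqI[of _ d]) (auto simp: algebra_simps)
  hence "h (psmult (x + y) ?e) = padd (psmult (alpha x) (h ?e)) (psmult (alpha y) (h ?e))"
    using hadd[of "psmult x ?e" "psmult y ?e"] alpha_e0 by simp
  also have "\<dots> = psmult (alpha x + alpha y) (h ?e)"
    by (rule list_eqI[of _ d]) (auto simp: algebra_simps)
  finally show ?thesis using alpha_e0[of "x + y"] smult_cancel[OF _ he0nz] by simp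
qed

lemma alpha_mult: "alpha (x * y) = alpha x * alpha y"
proof -
  let ?e = "unitv d 0 :: 'a list"
  have "psmult (x * y) ?e = psmult x (psmult y ?e)"
    by (rule list_eqI[of _ d]) (auto simp: algebra_simps)
  hence "h (psmult (x * y) ?e) = psmult (alpha x) (psmult (alpha y) (h ?e))"
    using hsmult[of "psmult y ?e" x] alpha_e0 by simp
  also have "\<dots> = psmult (alpha x * alpha y) (h ?e)"
    by (rule list_eqI[of _ d]) (auto simp: algebra_simps)
  finally show ?thesis using alpha_e0[of "x * y"] smult_cancel[OF _ he0nz] by simp
qed

lemma alpha_1: "alpha 1 = 1"
proof -
  let ?e = "unitv d 0 :: 'a list"
  have "psmult 1 ?e = ?e" by (rule list_eqI[of _ d]) auto
  have "psmult 1 (h ?e) = h ?e" by (rule list_eqI[of _ d]) auto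
  thus ?thesis using \<open>psmult 1 ?e = ?e\<close> alpha_e0[of 1] smult_cancel[OF _ he0nz, of "alpha 1" 1] by simp
qed

lemma alpha_0: "alpha 0 = 0"
proof -
  let ?e = "unitv d 0 :: 'a list"
  have "psmult 0 ?e = zv d" by (rule list_eqI[of _ d]) auto
  have "psmult 0 (h ?e) = zv d" by (rule list_eqI[of _ d]) auto
  thus ?thesis using \<open>psmult 0 ?e = zv d\<close> alpha_e0[of 0] smult_cancel[OF _ he0nz, of "alpha 0" 0] by simp
qed

lemma alpha_inj: "inj alpha"
proof (rule injI)
  fix x y assume "alpha x = alpha y"
  hence "h (psmult x (unitv d 0)) = h (psmult y (unitv d 0))" using alpha_e0 by simp
  hence E: "psmult x (unitv d 0) = psmult y (unitv d 0 :: 'a list)" using hinj by simp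
  from arg_cong[OF E, of "\<lambda>x. x!0"] d0 show "x = y" by simp
qed

lemma alpha_surj: "surj alpha"
proof -
  let ?e = "unitv d 0 :: 'a list"
  have "m \<in> range alpha" for m
  proof -
    obtain q where q: "length q = d" "h q = psmult m (h ?e)" using hsurj[of "psmult m (h ?e)"] by auto
    have "Col (zv d) (h q) (h ?e)"
      by (subst Col_comp[of _ d]) (use q in \<open>auto intro!: exI[of _ m]\<close>)
    hence "Col (h (zv d)) (h q) (h ?e)" by simp
    hence "Col (zv d) q ?e" using hcol[of "zv d" q ?e] q by simp
    then obtain c where c: "\<forall>i<d. q!i = zv d!i + c * (?e!i - zv d!i)"
      using Col_line[of "zv d" d q ?e] q unitv_nz[OF d0] by auto
    have "q = psmult c ?e" by (rule list_eqI[of _ d]) (use c q in auto)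
    hence "psmult (alpha c) (h ?e) = psmult m (h ?e)" using q alpha_e0 by simp
    hence "alpha c = m" using smult_cancel[OF _ he0nz] by simp
    thus ?thesis by blast
  qed
  thus ?thesis by blast
qed

lemma alpha_aut: "field_aut None alpha"
  unfolding field_aut_def bij_def using alpha_inj alpha_surj alpha_add alpha_mult alpha_0 alpha_1 by simp

lemma g_h: "length p = d \<Longrightarrow> g p = padd (h p) (g (zv d))"
  by (rule list_eqI[of _ d]) (auto simp: h_def)

end

lemma length_mat_vec[simp]: "length (mat_vec d M p) = d" by (simp add: mat_vec_def)
lemma nth_mat_vec[simp]: "i < d \<Longrightarrow> mat_vec d M p ! i = (\<Sum>j<d. M i j * p ! j)"
  by (simp add: mat_vec_def)

lemma lin_matrix:
  fixes T :: "'a::field list \<Rightarrow> 'a list" and beta :: "'a \<Rightarrow> 'a"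
  assumes Tlen: "\<And>x. length x = d \<Longrightarrow> length (T x) = d"
    and Tadd: "\<And>x y. length x = d \<Longrightarrow> length y = d \<Longrightarrow> T (padd x y) = padd (T x) (T y)"
    and Tsm: "\<And>c x. length x = d \<Longrightarrow> T (psmult c x) = psmult (beta c) (T x)"
    and p: "length p = d"
  shows "T p = mat_vec d (\<lambda>i j. T (unitv d j) ! i) (map beta p)"
proof -
  define tr where "tr k = mkp d (\<lambda>i. if i < k then p!i else 0)" for k
  have T0: "T (zv d) = zv d"
  proof -
    have "padd (zv d) (zv d) = (zv d :: 'a list)" by (rule list_eqI[of _ d]) auto
    hence E: "T (zv d) = padd (T (zv d)) (T (zv d))" using Tadd[of "zv d" "zv d"] by simp
    show ?thesis
    proof (rule list_eqI[of _ d])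
      fix i assume i: "i < d"
      have "T (zv d) ! i = T (zv d) ! i + T (zv d) ! i"
        using arg_cong[OF E, of "\<lambda>x. x!i"] i Tlen[of "zv d"] by simp
      hence "T (zv d) ! i = 0" by (subst (asm) add_cancel_right_right)
      thus "T (zv d) ! i = zv d ! i" using i by simp
    qed (use Tlen in auto)
  qed
  have main: "k \<le> d \<Longrightarrow> \<forall>i<d. T (tr k) ! i = (\<Sum>j<k. T (unitv d j) ! i * beta (p!j))" for k
  proof (induction k)
    case 0
    have "tr 0 = zv d" by (rule list_eqI[of _ d]) (auto simp: tr_def)
    thus ?case using T0 by simp
  next
    case (Suc k)
    have k: "k < d" using Suc.prems by simp
    have "tr (Suc k) = padd (tr k) (psmult (p!k) (unitv d k))"
      by (rule list_eqI[of _ d]) (auto simp: tr_def less_Suc_eq)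
    hence "T (tr (Suc k)) = padd (T (tr k)) (psmult (beta (p!k)) (T (unitv d k)))"
      using Tadd[of "tr k" "psmult (p!k) (unitv d k)"] Tsm[of "unitv d k" "p!k"] by (simp add: tr_def)
    thus ?case using Suc.IH Suc.prems Tlen[of "tr k"] Tlen[of "unitv d k"] by (simp add: tr_def algebra_simps)
  qed
  have "tr d = p" by (rule list_eqI[of _ d]) (use p in \<open>auto simp: tr_def\<close>)
  hence "\<forall>i<d. T p ! i = (\<Sum>j<d. T (unitv d j) ! i * beta (p!j))" using main[of d] by simp
  thus ?thesis by (intro list_eqI[of _ d]) (use p Tlen in auto)
qed

lemma mat_vec_add: "length x = d \<Longrightarrow> length y = d \<Longrightarrow> mat_vec d M (padd x y) = padd (mat_vec d M x) (mat_vec d M y)"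
  by (rule list_eqI[of _ d]) (auto simp: algebra_simps sum.distrib)

lemma mat_vec_smult: "length x = d \<Longrightarrow> mat_vec d M (psmult c x) = psmult c (mat_vec d M x)"
  by (rule list_eqI[of _ d]) (auto simp: algebra_simps sum_distrib_left)

lemma sum_delta_mult: "j < (d::nat) \<Longrightarrow> (\<Sum>jb<d. M a jb * (if jb = j then 1 else 0)) = (M a j :: 'a::field)"
proof -
  assume j: "j < d"
  have "(\<Sum>jb<d. M a jb * (if jb = j then 1 else 0)) = (\<Sum>jb<d. if jb = j then M a jb else 0)"
    by (rule sum.cong) auto
  also have "\<dots> = M a j" using j by (subst sum.delta) auto
  finally show ?thesis .
qed

lemma mat_vec_unit: "k < d \<Longrightarrow> j < d \<Longrightarrow> mat_vec d M (unitv d j) ! k = M k j"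
proof -
  assume k: "k < d" and j: "j < d"
  have "mat_vec d M (unitv d j) ! k = (\<Sum>jb<d. M k jb * unitv d j ! jb)" using k by simp
  also have "\<dots> = (\<Sum>jb<d. M k jb * (if jb = j then 1 else 0))" by (rule sum.cong) auto
  also have "\<dots> = M k j" using sum_delta_mult[OF j] .
  finally show ?thesis .
qed

lemma bij_invertible:
  fixes M :: "nat \<Rightarrow> nat \<Rightarrow> 'a::field"
  assumes inj: "\<And>x y. length x = d \<Longrightarrow> length y = d \<Longrightarrow> mat_vec d M x = mat_vec d M y \<Longrightarrow> x = y"
    and surj: "\<And>y. length y = d \<Longrightarrow> \<exists>x. length x = d \<and> mat_vec d M x = y"
  shows "invertible_mat d M"
proof -
  let ?L = "mat_vec d M"
  define L' where "L' y = (SOME x. length x = d \<and> ?L x = y)" for y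
  have L'1: "length (L' y) = d" "?L (L' y) = y" if "length y = d" for y
    using someI_ex[OF surj[OF that]] unfolding L'_def by auto
  have L'add: "L' (padd x y) = padd (L' x) (L' y)" if "length x = d" "length y = d" for x y
    by (rule inj) (use that L'1[OF that(1)] L'1[OF that(2)] L'1[of "padd x y"] mat_vec_add[of "L' x" d "L' y" M] in auto)
  have L'sm: "L' (psmult c x) = psmult c (L' x)" if "length x = d" for c x
    by (rule inj) (use that L'1[OF that] L'1[of "psmult c x"] mat_vec_smult[of "L' x" d M c] in auto)
  define N where "N i j = L' (unitv d j) ! i" for i j
  have L'mat: "L' y = mat_vec d N (map id y)" if "length y = d" for y
    unfolding N_def by (rule lin_matrix[of d L' id y]) (use that L'1 L'add L'sm in auto)
  have LL': "L' (?L x) = x" if "length x = d" for x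
    by (rule inj) (use that L'1 in auto)
  show ?thesis unfolding invertible_mat_def
  proof (intro exI[of _ N] allI impI conjI)
    fix i j assume i: "i < d" and j: "j < d"
    have "(\<Sum>k<d. N i k * M k j) = (\<Sum>k<d. N i k * ?L (unitv d j) ! k)"
    proof (rule sum.cong)
      fix k assume "k \<in> {..<d}"
      hence "?L (unitv d j) ! k = M k j" using mat_vec_unit[of k d j M] j by blast
      thus "N i k * M k j = N i k * ?L (unitv d j) ! k" by (simp only:)
    qed simp
    also have "\<dots> = mat_vec d N (?L (unitv d j)) ! i" using i by simp
    also have "\<dots> = L' (?L (unitv d j)) ! i" using L'mat[of "?L (unitv d j)"] by simp
    also have "\<dots> = (if i = j then 1 else 0)" using LL'[of "unitv d j"] i by simp
    finally show "(\<Sum>k<d. N i k * M k j) = (if i = j then 1 else 0)" .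
    have "(\<Sum>k<d. M i k * N k j) = ?L (L' (unitv d j)) ! i"
      using i L'1(1)[OF length_unitv] by (simp add: N_def)
    also have "\<dots> = (if i = j then 1 else 0)" using L'1(2)[OF length_unitv] i by (simp del: nth_mat_vec)
    finally show "(\<Sum>k<d. M i k * N k j) = (if i = j then 1 else 0)" .
  qed
qed

context collin
begin

definition Mh :: "nat \<Rightarrow> nat \<Rightarrow> 'a" where "Mh i j = h (unitv d j) ! i"

lemma h_mat: "length p = d \<Longrightarrow> h p = mat_vec d Mh (map alpha p)"
  unfolding Mh_def by (rule lin_matrix[of d h alpha p]) (auto simp: hadd hsmult)

lemma Mh_inv: "invertible_mat d Mh"
proof (rule bij_invertible)
  have aa: "map alpha (map (inv alpha) x) = x" for x
    using alpha_surj by (induction x) (auto simp: surj_f_inv_f)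
  fix x y :: "'a list" assume L: "length x = d" "length y = d" and E: "mat_vec d Mh x = mat_vec d Mh y"
  have "h (map (inv alpha) x) = h (map (inv alpha) y)" using h_mat[of "map (inv alpha) x"] h_mat[of "map (inv alpha) y"] L E aa by simp
  hence "map (inv alpha) x = map (inv alpha) y" using hinj L by simp
  hence "map alpha (map (inv alpha) x) = map alpha (map (inv alpha) y)" by simp
  thus "x = y" using aa by simp
next
  fix y :: "'a list" assume "length y = d"
  then obtain p where "length p = d" "h p = y" using hsurj by blast
  thus "\<exists>x. length x = d \<and> mat_vec d Mh x = y" using h_mat by (intro exI[of _ "map alpha p"]) auto
qed

lemma g_rep: "length p = d \<Longrightarrow> g p = padd (mat_vec d Mh (map alpha p)) (g (zv d))"
proof -
  assume p: "length p = d"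
  have "g p = padd (h p) (g (zv d))" using g_h[OF p] .
  also have "h p = mat_vec d Mh (map alpha p)" using h_mat[OF p] .
  finally show ?thesis .
qed

end

section \<open>Field automorphisms preserve field-definable relations\<close>

lemma feval_aut:
  assumes "field_aut le b"
  shows "feval t (b \<circ> e) = b (feval t e)"
  using assms by (induction t) (auto simp: field_aut_def)

lemma fsat_aut:
  assumes a: "field_aut le b"
  shows "fsat le phi (b \<circ> e) \<longleftrightarrow> fsat le phi e"
proof (induction phi arbitrary: e)
  case (FEq s t)
  have "inj b" using a by (auto simp: field_aut_def bij_def)
  thus ?case unfolding fsat.simps feval_aut[OF a] by (simp add: inj_eq)
next
  case (FLe s t)
  show ?case unfolding fsat.simps feval_aut[OF a] using a by (cases le) (simp_all add: field_aut_def)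
next
  case (FNot phi)
  thus ?case by simp
next
  case (FConj phi psi)
  thus ?case by simp
next
  case (FEx n phi)
  have sb: "surj b" using a by (auto simp: field_aut_def bij_def)
  have "(b \<circ> e)(n := b y) = b \<circ> (e(n := y))" for y by auto
  hence "(\<exists>x. fsat le phi ((b \<circ> e)(n := x))) \<longleftrightarrow> (\<exists>y. fsat le phi ((b \<circ> e)(n := b y)))"
    using sb by (metis surjD)
  also have "\<dots> \<longleftrightarrow> (\<exists>y. fsat le phi (e(n := y)))"
    by (simp only: \<open>\<And>y. (b \<circ> e)(n := b y) = b \<circ> (e(n := y))\<close> FEx.IH)
  finally show ?case by (simp only: fsat.simps)
qed

lemma length_concat_d: "\<forall>p\<in>set ps. length p = d \<Longrightarrow> length (concat ps) = d * length ps"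
  by (induction ps) auto

lemma to_points_concat: "\<forall>p\<in>set ps. length p = d \<Longrightarrow> to_points d (length ps) (concat ps) = ps"
proof (induction ps)
  case Nil
  thus ?case by (simp add: to_points_def)
next
  case (Cons p ps)
  have "to_points d (length (p # ps)) (concat (p # ps)) =
      map (\<lambda>k. take d (drop (k * d) (p @ concat ps))) (0 # map Suc [0..<length ps])"
    unfolding to_points_def by (simp add: map_upt_Suc del: upt_Suc)
  also have "\<dots> = p # map (\<lambda>k. take d (drop (k * d) (concat ps))) [0..<length ps]"
    using Cons.prems by simp
  also have "\<dots> = p # ps" using Cons by (simp add: to_points_def)
  finally show ?case .
qed

lemma def_rel_aut:
  assumes fd: "field_definable_geom le d ar rel" and a: "field_aut le b"
    and ps: "length ps = ar i" "\<forall>p\<in>set ps. length p = d"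
  shows "rel i (map (map b) ps) \<longleftrightarrow> rel i ps"
proof -
  obtain phi where phi: "\<forall>e. fsat le phi e \<longleftrightarrow> rel i (to_points d (ar i) (map e [0..<d * ar i]))"
    using fd by (auto simp: field_definable_geom_def field_definable_rel_def)
  define xs where "xs = concat ps"
  have lx: "length xs = d * ar i" using length_concat_d[OF ps(2)] ps(1) by (simp add: xs_def)
  define e where "e n = xs ! n" for n
  have m1: "map e [0..<d * ar i] = xs"
    by (rule list_eqI[of _ "d * ar i"]) (use lx in \<open>auto simp: e_def\<close>)
  have "map (b \<circ> e) [0..<d * ar i] = map b (map e [0..<d * ar i])" by simp
  also have "\<dots> = map b xs" using m1 by simp
  also have "\<dots> = concat (map (map b) ps)" by (simp add: xs_def map_concat)
  finally have m2: "map (b \<circ> e) [0..<d * ar i] = concat (map (map b) ps)" .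
  have "rel i ps \<longleftrightarrow> fsat le phi e" using phi m1 to_points_concat[OF ps(2)] ps(1) by (simp add: xs_def)
  also have "\<dots> \<longleftrightarrow> fsat le phi (b \<circ> e)" using fsat_aut[OF a] by simp
  also have "\<dots> \<longleftrightarrow> rel i (map (map b) ps)"
    using phi m2 to_points_concat[of "map (map b) ps" d] ps by simp
  finally show ?thesis by simp
qed

section \<open>Geometry automorphisms preserve definable relations\<close>

lemma rsat_aut:
  assumes a: "geom_aut d ar rel f"
  shows "(\<forall>n. length (e n) = d) \<Longrightarrow> rsat d ar rel phi (f \<circ> e) \<longleftrightarrow> rsat d ar rel phi e"
proof (induction phi arbitrary: e)
  case (RRel i vs)
  have st: "set (map e vs) \<subseteq> points d" using RRel by auto
  have P: "\<forall>i ps. length ps = ar i \<and> set ps \<subseteq> points d \<longrightarrow> (rel i ps \<longleftrightarrow> rel i (map f ps))"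
    using a by (simp add: geom_aut_def)
  have "rsat d ar rel (RRel i vs) (f \<circ> e) \<longleftrightarrow> length vs = ar i \<and> rel i (map f (map e vs))"
    by (simp only: rsat.simps map_map)
  also have "\<dots> \<longleftrightarrow> length vs = ar i \<and> rel i (map e vs)"
    using P[rule_format, of "map e vs" i] st by auto
  finally show ?case by (simp only: rsat.simps)
next
  case (REq m n)
  have inj: "inj_on f (points d)" using a by (auto simp: geom_aut_def bij_betw_def)
  have "f (e m) = f (e n) \<longleftrightarrow> e m = e n"
    using inj_onD[OF inj, of "e m" "e n"] REq.prems by auto
  thus ?case by (simp only: rsat.simps o_apply)
next
  case (RNot phi) thus ?case by simp
next
  case (RConj phi psi) thus ?case by simp
next
  case (REx n phi)
  have le: "\<forall>m. length (e m) = d" using REx.prems .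
  have img: "f ` points d = points d" using a by (simp add: geom_aut_def bij_betw_def)
  have step1: "(\<exists>p\<in>points d. X p) \<longleftrightarrow> (\<exists>q\<in>points d. X (f q))" for X
  proof
    assume "\<exists>p\<in>points d. X p"
    then obtain p where p: "p \<in> points d" "X p" by blast
    from p(1) img have "p \<in> f ` points d" by simp
    then obtain q where "q \<in> points d" "p = f q" by blast
    thus "\<exists>q\<in>points d. X (f q)" using p by blast
  next
    assume "\<exists>q\<in>points d. X (f q)"
    then obtain q where q: "q \<in> points d" "X (f q)" by blast
    have "f q \<in> points d" using img q(1) by blast
    thus "\<exists>p\<in>points d. X p" using q by blast
  qed
  have eq: "(f \<circ> e)(n := f q) = f \<circ> (e(n := q))" for q by auto
  have step2: "rsat d ar rel phi ((f \<circ> e)(n := f q)) \<longleftrightarrow> rsat d ar rel phi (e(n := q))"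
    if q: "q \<in> points d" for q
  proof -
    have "\<forall>m. length ((e(n := q)) m) = d" using le q by simp
    from REx.IH[OF this] show ?thesis unfolding eq .
  qed
  have "rsat d ar rel (REx n phi) (f \<circ> e) \<longleftrightarrow> (\<exists>p\<in>points d. rsat d ar rel phi ((f \<circ> e)(n := p)))"
    by (simp only: rsat.simps)
  also have "\<dots> \<longleftrightarrow> (\<exists>q\<in>points d. rsat d ar rel phi ((f \<circ> e)(n := f q)))" by (rule step1)
  also have "\<dots> \<longleftrightarrow> (\<exists>q\<in>points d. rsat d ar rel phi (e(n := q)))" using step2 by blast
  also have "\<dots> \<longleftrightarrow> rsat d ar rel (REx n phi) e" by (simp only: rsat.simps)
  finally show ?case .
qed

lemma geom_def3_aut:
  assumes T: "geom_definable3 d ar rel T" and a: "geom_aut d ar rel f"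
    and L: "length p = d" "length q = d" "length r = d"
  shows "T (f p) (f q) (f r) \<longleftrightarrow> T p q r"
proof -
  obtain phi where phi: "\<forall>e. (\<forall>n. e n \<in> points d) \<longrightarrow> (rsat d ar rel phi e \<longleftrightarrow> T (e 0) (e 1) (e 2))"
    using T by (auto simp: geom_definable3_def)
  define e where "e n = (if n = 0 then p else if n = 1 then q else r)" for n :: nat
  have le: "\<forall>n. length (e n) = d" using L by (simp add: e_def)
  have lf: "length (f x) = d" if "length x = d" for x
    using a that by (auto simp: geom_aut_def bij_betw_def)
  have "T (f p) (f q) (f r) \<longleftrightarrow> rsat d ar rel phi (f \<circ> e)"
    using phi[rule_format, of "f \<circ> e"] le lf by (simp add: e_def)
  also have "\<dots> \<longleftrightarrow> rsat d ar rel phi e" using rsat_aut[OF a le] .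
  also have "\<dots> \<longleftrightarrow> T p q r" using phi[rule_format, of e] le by (simp add: e_def)
  finally show ?thesis .
qed

section \<open>Ordered fields\<close>

context
  fixes r :: "'a::field \<Rightarrow> 'a \<Rightarrow> bool"
  assumes ofr: "ordered_field_rel r"
begin

lemma O_refl: "r x x" using ofr[unfolded ordered_field_rel_def, THEN conjunct1] by (rule spec)
lemma O_antisym: "r x y \<Longrightarrow> r y x \<Longrightarrow> x = y"
proof -
  have "\<forall>x y. r x y \<and> r y x \<longrightarrow> x = y" by (fact ofr[unfolded ordered_field_rel_def, THEN conjunct2, THEN conjunct1])
  thus "r x y \<Longrightarrow> r y x \<Longrightarrow> x = y" by blast
qed
lemma O_trans: "r x y \<Longrightarrow> r y z \<Longrightarrow> r x z"
proof -
  have "\<forall>x y z. r x y \<and> r y z \<longrightarrow> r x z" by (fact ofr[unfolded ordered_field_rel_def, THEN conjunct2, THEN conjunct2, THEN conjunct1])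
  thus "r x y \<Longrightarrow> r y z \<Longrightarrow> r x z" by blast
qed
lemma O_total: "r x y \<or> r y x"
proof -
  have "\<forall>x y. r x y \<or> r y x" by (fact ofr[unfolded ordered_field_rel_def, THEN conjunct2, THEN conjunct2, THEN conjunct2, THEN conjunct1])
  thus ?thesis by blast
qed
lemma O_add: "r x y \<Longrightarrow> r (x + z) (y + z)"
proof -
  have "\<forall>x y z. r x y \<longrightarrow> r (x + z) (y + z)" by (fact ofr[unfolded ordered_field_rel_def, THEN conjunct2, THEN conjunct2, THEN conjunct2, THEN conjunct2, THEN conjunct1])
  thus "r x y \<Longrightarrow> r (x + z) (y + z)" by blast
qed
lemma O_mul: "r 0 x \<Longrightarrow> r 0 y \<Longrightarrow> r 0 (x * y)"
proof -
  have "\<forall>x y. r 0 x \<and> r 0 y \<longrightarrow> r 0 (x * y)" by (fact ofr[unfolded ordered_field_rel_def, THEN conjunct2, THEN conjunct2, THEN conjunct2, THEN conjunct2, THEN conjunct2])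
  thus "r 0 x \<Longrightarrow> r 0 y \<Longrightarrow> r 0 (x * y)" by blast
qed

lemma O_sub: "r x y \<longleftrightarrow> r 0 (y - x)"
proof
  assume "r x y" thus "r 0 (y - x)" using O_add[of x y "- x"] by simp
next
  assume "r 0 (y - x)" thus "r x y" using O_add[of 0 "y - x" x] by simp
qed

lemma O_01: "r 0 1"
proof (rule ccontr)
  assume n: "\<not> r 0 1"
  hence "r 1 0" using O_total by blast
  hence "r 0 (- 1)" using O_sub[of 1 0] by simp
  hence "r 0 ((-1) * (-1))" using O_mul by blast
  hence "r 0 1" by simp
  with n show False by simp
qed

lemma O_pos_add: "r 0 x \<Longrightarrow> r 0 y \<Longrightarrow> r 0 (x + y)"
proof -
  assume x: "r 0 x" and y: "r 0 y"
  have "r (0 + y) (x + y)" using O_add[OF x] .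
  hence "r y (x + y)" by simp
  thus "r 0 (x + y)" using O_trans[OF y] by blast
qed

lemma O_sq: "r 0 (x * x)"
proof (cases "r 0 x")
  case True thus ?thesis using O_mul by blast
next
  case False
  hence "r x 0" using O_total by blast
  hence "r 0 (- x)" using O_sub[of x 0] by simp
  hence "r 0 ((- x) * (- x))" using O_mul by blast
  thus ?thesis by simp
qed

lemma O_inv: "r 0 x \<Longrightarrow> r 0 (inverse x)"
proof (cases "x = 0")
  case True thus ?thesis using O_refl by simp
next
  case False
  assume "r 0 x"
  hence "r 0 (x * (inverse x * inverse x))" using O_mul O_sq by blast
  moreover have "x * (inverse x * inverse x) = inverse x"
    using False by (simp add: mult.assoc[symmetric])
  ultimately show ?thesis by simp
qed

lemma O_10: "\<not> r 1 0"
proof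
  assume "r 1 0"
  hence "(1::'a) = 0" using O_antisym[OF _ O_01] by blast
  thus False by simp
qed

lemma O_seg: "(\<exists>c. c * (y + 1) = 1 \<and> r 0 c \<and> r c 1) \<longleftrightarrow> r 0 y"
proof
  assume "\<exists>c. c * (y + 1) = 1 \<and> r 0 c \<and> r c 1"
  then obtain c where c: "c * (y + 1) = 1" "r 0 c" "r c 1" by blast
  have c0: "c \<noteq> 0" using c by auto
  have "r 0 ((1 - c) * inverse c)" using O_mul[OF _ O_inv[OF c(2)], of "1 - c"] c(3) O_sub[of c 1] by simp
  moreover have "(1 - c) * inverse c = y" using c c0 by (simp add: field_simps)
  ultimately show "r 0 y" by simp
next
  assume y: "r 0 y"
  have p: "r 0 (y + 1)" using O_pos_add[OF y O_01] .
  have nz: "y + 1 \<noteq> 0"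
  proof
    assume "y + 1 = 0"
    hence "y = -1" by (simp add: eq_neg_iff_add_eq_0)
    with y have "r 1 0" using O_sub[of 1 0] by simp
    thus False using O_10 by simp
  qed
  define c where "c = inverse (y + 1)"
  have "c * (y + 1) = 1" using nz by (simp add: c_def)
  moreover have "r 0 c" using O_inv[OF p] by (simp add: c_def)
  moreover have "r 0 (1 - c)"
  proof -
    have "1 - c = y * c" using nz by (simp add: c_def field_simps)
    thus ?thesis using O_mul[OF y \<open>r 0 c\<close>] by simp
  qed
  hence "r c 1" using O_sub[of c 1] by simp
  ultimately show "\<exists>c. c * (y + 1) = 1 \<and> r 0 c \<and> r c 1" by blast
qed

end

lemma Bw_comp:
  assumes "length p = d" "length q = d" "length w = d"
  shows "Bw r p q w \<longleftrightarrow> (\<exists>c. (\<forall>i<d. q!i = p!i + c * (w!i - p!i)) \<and> r 0 c \<and> r c 1)"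
proof -
  have "q = padd p (psmult c (psub w p)) \<longleftrightarrow> (\<forall>i<d. q!i = p!i + c * (w!i - p!i))" for c
  proof
    assume "q = padd p (psmult c (psub w p))" thus "\<forall>i<d. q!i = p!i + c * (w!i - p!i)"
      using assms by simp
  next
    assume "\<forall>i<d. q!i = p!i + c * (w!i - p!i)" thus "q = padd p (psmult c (psub w p))"
      by (intro list_eqI[of _ d]) (use assms in auto)
  qed
  thus ?thesis by (simp add: Bw_def)
qed

lemma Col_swap23: "length a = d \<Longrightarrow> length b = d \<Longrightarrow> length c = d \<Longrightarrow> Col a b c \<Longrightarrow> Col a c b"
  using NC_swap23 by blast

lemma NC_swap12:
  assumes L: "length p = d" "length q = d" "length w = d" and nc: "\<not> Col p q w"
  shows "\<not> Col q p w"
proof -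
  have "indep d (psub p q) (psub w q)" unfolding indep_def
  proof (intro allI impI)
    fix s t assume E: "padd (psmult s (psub p q)) (psmult t (psub w q)) = zv d"
    have "\<forall>i<d. (- s - t) * (q!i - p!i) + t * (w!i - p!i) = 0 * (q!i - p!i) + 0 * (w!i - p!i)"
    proof (intro allI impI)
      fix i assume i: "i < d"
      have "s * (p!i - q!i) + t * (w!i - q!i) = 0" using arg_cong[OF E, of "\<lambda>x. x!i"] i L by simp
      thus "(- s - t) * (q!i - p!i) + t * (w!i - p!i) = 0 * (q!i - p!i) + 0 * (w!i - p!i)"
        by (simp add: algebra_simps)
    qed
    from NC_coeff[OF L nc this] show "s = 0 \<and> t = 0" by auto
  qed
  thus ?thesis using NC_indep[OF L(2,1,3)] by simp
qed

lemma Col_swap12: "length p = d \<Longrightarrow> length q = d \<Longrightarrow> length w = d \<Longrightarrow> Col q p w \<Longrightarrow> Col p q w"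
  using NC_swap12 by blast

lemma Col_Bw:
  assumes ofr: "ordered_field_rel r" and L: "length p = d" "length q = d" "length w = d"
  shows "Col p q w \<longleftrightarrow> Bw r p q w \<or> Bw r q p w \<or> Bw r p w q"
proof
  assume "Col p q w"
  then consider (e) "w = p" | (l) lam where "\<forall>i<d. q!i = p!i + lam * (w!i - p!i)"
    using Col_comp[OF L] by blast
  thus "Bw r p q w \<or> Bw r q p w \<or> Bw r p w q"
  proof cases
    case e
    have "Bw r q p w" using Bw_comp[OF L(2,1,3)] e O_01[OF ofr] O_refl[OF ofr]
      by (auto intro!: exI[of _ 1])
    thus ?thesis by blast
  next
    case l
    consider "r 0 lam" "r lam 1" | "r lam 0" | "r 1 lam" using O_total[OF ofr] by blast
    thus ?thesis
    proof cases
      case 1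
      hence "Bw r p q w" using Bw_comp[OF L] l by blast
      thus ?thesis by blast
    next
      case 2
      have nl: "r 0 (- lam)" using 2 O_sub[OF ofr, of lam 0] by simp
      have p1: "r 0 (1 - lam)" using O_pos_add[OF ofr O_01[OF ofr] nl] by simp
      have nz: "1 - lam \<noteq> 0"
      proof
        assume "1 - lam = 0" hence "lam = 1" by simp
        with 2 show False using O_10[OF ofr] by simp
      qed
      define c where "c = (- lam) * inverse (1 - lam)"
      have c0: "r 0 c" unfolding c_def using O_mul[OF ofr nl O_inv[OF ofr p1]] .
      have "1 - c = inverse (1 - lam)" using nz by (simp add: c_def field_simps)
      hence "r c 1" using O_inv[OF ofr p1] O_sub[OF ofr, of c 1] by simp
      moreover have "\<forall>i<d. p!i = q!i + c * (w!i - q!i)"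
      proof (intro allI impI)
        fix i assume i: "i < d"
        have qi: "q!i = p!i + lam * (w!i - p!i)" using l i by simp
        have cl: "c * (1 - lam) = - lam" using nz by (simp add: c_def)
        have "q!i + c * (w!i - q!i) = p!i + (lam + c * (1 - lam)) * (w!i - p!i)"
          unfolding qi by (simp add: algebra_simps)
        also have "\<dots> = p!i" unfolding cl by simp
        finally show "p!i = q!i + c * (w!i - q!i)" by simp
      qed
      ultimately have "Bw r q p w" using Bw_comp[OF L(2,1,3)] c0 by blast
      thus ?thesis by blast
    next
      case 3
      have lp: "r 0 lam" using O_trans[OF ofr O_01[OF ofr] 3] .
      have nz: "lam \<noteq> 0" using 3 O_10[OF ofr] by auto
      define c where "c = inverse lam"
      have c0: "r 0 c" unfolding c_def using O_inv[OF ofr lp] .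
      have "1 - c = (lam - 1) * inverse lam" using nz by (simp add: c_def field_simps)
      moreover have "r 0 ((lam - 1) * inverse lam)" using O_mul[OF ofr _ O_inv[OF ofr lp]] 3 O_sub[OF ofr, of 1 lam] by simp
      ultimately have "r c 1" using O_sub[OF ofr, of c 1] by simp
      moreover have "\<forall>i<d. w!i = p!i + c * (q!i - p!i)"
      proof (intro allI impI)
        fix i assume i: "i < d"
        have qi: "q!i = p!i + lam * (w!i - p!i)" using l i by simp
        have cl: "c * lam = 1" using nz by (simp add: c_def)
        have "p!i + c * (q!i - p!i) = p!i + (c * lam) * (w!i - p!i)"
          unfolding qi by (simp add: algebra_simps)
        also have "\<dots> = w!i" unfolding cl by simp
        finally show "w!i = p!i + c * (q!i - p!i)" by simp
      qed
      ultimately have "Bw r p w q" using Bw_comp[OF L(1,3,2)] c0 by blast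
      thus ?thesis by blast
    qed
  qed
next
  have BC: "Bw r a b c \<Longrightarrow> Col a b c" for a b c by (auto simp: Bw_def Col_def)
  assume "Bw r p q w \<or> Bw r q p w \<or> Bw r p w q"
  thus "Col p q w" using BC Col_swap12[OF L] Col_swap23[OF L(1,3,2)] by blast
qed

lemma transl_eq2: "((y::'a::field) + t = x + t + c * ((z + t) - (x + t))) \<longleftrightarrow> (y = x + c * (z - x))"
  by (simp add: algebra_simps)

lemma Bw_transl:
  assumes L: "length x = d" "length y = d" "length z = d" "length t = d"
  shows "Bw r (padd x t) (padd y t) (padd z t) \<longleftrightarrow> Bw r x y z"
proof -
  have "(padd y t!i = padd x t!i + c * (padd z t!i - padd x t!i)) \<longleftrightarrow> (y!i = x!i + c * (z!i - x!i))"
    if i: "i < d" for i c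
  proof -
    have "padd y t!i = y!i + t!i" "padd x t!i = x!i + t!i" "padd z t!i = z!i + t!i" using i L by auto
    thus ?thesis by (simp only: transl_eq2)
  qed
  hence "(\<forall>i<d. padd y t!i = padd x t!i + c * (padd z t!i - padd x t!i)) \<longleftrightarrow> (\<forall>i<d. y!i = x!i + c * (z!i - x!i))"
    for c by simp
  thus ?thesis using Bw_comp[OF L(1-3)] Bw_comp[of "padd x t" d "padd y t" "padd z t"] L by simp
qed

lemma Bw_line:
  assumes ofr: "ordered_field_rel r" and w: "length w = d" "w \<noteq> zv d"
  shows "Bw r (psmult (-1) w) (zv d) (psmult y w) \<longleftrightarrow> r 0 y"
proof -
  obtain j where j: "j < d" "w!j \<noteq> 0" using w list_eqI[of w d "zv d"] by auto
  have "(\<forall>i<d. zv d!i = psmult (-1) w!i + c * (psmult y w!i - psmult (-1) w!i)) \<longleftrightarrow> c * (y + 1) = 1" for c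
  proof
    assume H: "\<forall>i<d. zv d!i = psmult (-1) w!i + c * (psmult y w!i - psmult (-1) w!i)"
    have "0 = - w!j + c * (y * w!j + w!j)" using H j w by simp
    hence "(c * (y + 1) - 1) * w!j = 0" by (simp add: algebra_simps)
    thus "c * (y + 1) = 1" using j by simp
  next
    assume H: "c * (y + 1) = 1"
    show "\<forall>i<d. zv d!i = psmult (-1) w!i + c * (psmult y w!i - psmult (-1) w!i)"
    proof (intro allI impI)
      fix i assume i: "i < d"
      have "- w!i + c * (y * w!i + w!i) = (c * (y + 1) - 1) * w!i" by (simp add: algebra_simps)
      also have "\<dots> = 0" using H by simp
      finally show "zv d!i = psmult (-1) w!i + c * (psmult y w!i - psmult (-1) w!i)" using i w by simp
    qed
  qed
  hence "Bw r (psmult (-1) w) (zv d) (psmult y w) \<longleftrightarrow> (\<exists>c. c * (y + 1) = 1 \<and> r 0 c \<and> r c 1)"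
    using Bw_comp[of "psmult (-1) w" d "zv d" "psmult y w" r] w by simp
  also have "\<dots> \<longleftrightarrow> r 0 y" using O_seg[OF ofr] .
  finally show ?thesis .
qed

context collin
begin

lemma alpha_m1: "alpha (-1) = -1"
proof -
  have "alpha (-1) + alpha 1 = alpha 0" using alpha_add[of "-1" 1] by simp
  thus ?thesis using alpha_0 alpha_1 by (simp add: eq_neg_iff_add_eq_0)
qed

lemma alpha_diff: "alpha (y - x) = alpha y - alpha x"
proof -
  have "alpha (y - x) + alpha x = alpha y" using alpha_add[of "y - x" x] by simp
  thus ?thesis by (simp add: eq_diff_eq)
qed

lemma alpha_pos:
  assumes ofr: "ordered_field_rel r"
    and bwp: "\<And>p q w. length p = d \<Longrightarrow> length q = d \<Longrightarrow> length w = d \<Longrightarrow>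
        Bw r (g p) (g q) (g w) \<longleftrightarrow> Bw r p q w"
  shows "r 0 y \<longleftrightarrow> r 0 (alpha y)"
proof -
  let ?e = "unitv d 0 :: 'a list"
  let ?t = "g (zv d)"
  have e: "length ?e = d" "?e \<noteq> zv d" using unitv_nz[OF d0] by auto
  have he: "length (h ?e) = d" "h ?e \<noteq> zv d" using he0nz by auto
  have "r 0 y \<longleftrightarrow> Bw r (psmult (-1) ?e) (zv d) (psmult y ?e)" using Bw_line[OF ofr e] by simp
  also have "\<dots> \<longleftrightarrow> Bw r (g (psmult (-1) ?e)) (g (zv d)) (g (psmult y ?e))" using bwp by simp
  also have "\<dots> \<longleftrightarrow> Bw r (padd (psmult (-1) (h ?e)) ?t) (padd (zv d) ?t) (padd (psmult (alpha y) (h ?e)) ?t)"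
  proof -
    have 1: "g (psmult (-1) ?e) = padd (psmult (-1) (h ?e)) ?t"
      using g_h[of "psmult (-1) ?e"] alpha_e0[of "-1"] alpha_m1 by simp
    have 2: "padd (zv d) ?t = ?t" by (rule list_eqI[of _ d]) auto
    have 3: "g (psmult y ?e) = padd (psmult (alpha y) (h ?e)) ?t"
      using g_h[of "psmult y ?e"] alpha_e0[of y] by simp
    show ?thesis unfolding 1 2 3 ..
  qed
  also have "\<dots> \<longleftrightarrow> Bw r (psmult (-1) (h ?e)) (zv d) (psmult (alpha y) (h ?e))"
    by (rule Bw_transl) (use he in auto)
  also have "\<dots> \<longleftrightarrow> r 0 (alpha y)" using Bw_line[OF ofr he] .
  finally show ?thesis .
qed

lemma alpha_order:
  assumes ofr: "ordered_field_rel r"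
    and bwp: "\<And>p q w. length p = d \<Longrightarrow> length q = d \<Longrightarrow> length w = d \<Longrightarrow>
        Bw r (g p) (g q) (g w) \<longleftrightarrow> Bw r p q w"
  shows "r x y \<longleftrightarrow> r (alpha x) (alpha y)"
proof -
  have "r x y \<longleftrightarrow> r 0 (y - x)" using O_sub[OF ofr, of x y] .
  also have "\<dots> \<longleftrightarrow> r 0 (alpha (y - x))" using alpha_pos[OF ofr bwp] by blast
  also have "\<dots> \<longleftrightarrow> r 0 (alpha y - alpha x)" by (simp only: alpha_diff)
  also have "\<dots> \<longleftrightarrow> r (alpha x) (alpha y)" using O_sub[OF ofr, of "alpha x" "alpha y"] by simp
  finally show ?thesis .
qed

end

lemma map_aut_smult_unit:
  assumes "field_aut le a" "j < d"
  shows "map a (psmult x (unitv d j)) = psmult (a x) (unitv d j)"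
proof (rule list_eqI[of _ d])
  fix i assume i: "i < d"
  have a0: "a 0 = 0" and a1: "a (x * 1) = a x" using assms(1) by (auto simp: field_aut_def)
  show "map a (psmult x (unitv d j)) ! i = psmult (a x) (unitv d j) ! i"
    using i a0 by (cases "i = j") auto
qed auto

lemma invertible_col_nz:
  assumes inv: "invertible_mat d M" and d: "0 < d"
  shows "mat_vec d M (unitv d 0) \<noteq> zv d"
proof
  assume Z: "mat_vec d M (unitv d 0) = zv d"
  obtain N where N: "\<forall>i<d. \<forall>j<d. (\<Sum>k<d. N i k * M k j) = (if i = j then 1 else 0)"
    using inv unfolding invertible_mat_def by blast
  have "M k 0 = 0" if k: "k < d" for k
  proof -
    have "mat_vec d M (unitv d 0) ! k = M k 0" using mat_vec_unit[OF k d] .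
    thus ?thesis using Z k by simp
  qed
  hence "(\<Sum>k<d. N 0 k * M k 0) = 0" by simp
  moreover have "(\<Sum>k<d. N 0 k * M k 0) = 1" using N d by auto
  ultimately show False by simp
qed

lemma uniqueness:
  assumes d: "0 < d"
    and a1: "field_aut le a1" and a2: "field_aut le a2"
    and M1: "invertible_mat d M1" "length b1 = d" "\<forall>p\<in>points d. A1 p = padd (mat_vec d M1 p) b1"
    and M2: "invertible_mat d M2" "length b2 = d" "\<forall>p\<in>points d. A2 p = padd (mat_vec d M2 p) b2"
    and E: "\<forall>p\<in>points d. A1 (map a1 p) = A2 (map a2 p)"
  shows "a1 = a2 \<and> (\<forall>p\<in>points d. A1 p = A2 p)"
proof -
  let ?e = "unitv d 0 :: 'a list"
  define c1 where "c1 = mat_vec d M1 ?e"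
  define c2 where "c2 = mat_vec d M2 ?e"
  have lc: "length c1 = d" "length c2 = d" by (auto simp: c1_def c2_def)
  have key: "padd (psmult (a1 x) c1) b1 = padd (psmult (a2 x) c2) b2" for x
  proof -
    have "A1 (map a1 (psmult x ?e)) = A2 (map a2 (psmult x ?e))" using E by simp
    moreover have "A1 (map a1 (psmult x ?e)) = padd (psmult (a1 x) c1) b1"
      using M1(3) map_aut_smult_unit[OF a1 d] mat_vec_smult[of ?e d M1] by (simp add: c1_def)
    moreover have "A2 (map a2 (psmult x ?e)) = padd (psmult (a2 x) c2) b2"
      using M2(3) map_aut_smult_unit[OF a2 d] mat_vec_smult[of ?e d M2] by (simp add: c2_def)
    ultimately show ?thesis by simp
  qed
  have a10: "a1 0 = 0" "a1 1 = 1" using a1 by (auto simp: field_aut_def)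
  have a20: "a2 0 = 0" "a2 1 = 1" using a2 by (auto simp: field_aut_def)
  have bb: "b1 = b2"
  proof (rule list_eqI[of _ d])
    fix i assume i: "i < d"
    show "b1!i = b2!i" using arg_cong[OF key[of 0], of "\<lambda>x. x!i"] i a10 a20 lc M1(2) M2(2) by simp
  qed (use M1(2) M2(2) in auto)
  have cx: "psmult (a1 x) c1 = psmult (a2 x) c2" for x
  proof (rule list_eqI[of _ d])
    fix i assume i: "i < d"
    show "psmult (a1 x) c1 ! i = psmult (a2 x) c2 ! i"
      using arg_cong[OF key[of x], of "\<lambda>x. x!i"] i lc M1(2) M2(2) bb by simp
  qed (use lc in auto)
  have cc: "c1 = c2"
  proof (rule list_eqI[of _ d])
    fix i assume i: "i < d"
    show "c1!i = c2!i" using arg_cong[OF cx[of 1], of "\<lambda>x. x!i"] i lc a10 a20 by simp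
  qed (use lc in auto)
  have nz: "c1 \<noteq> zv d" using invertible_col_nz[OF M1(1) d] by (simp add: c1_def)
  have aa: "a1 = a2"
  proof
    fix x show "a1 x = a2 x" using cx[of x] cc smult_cancel[OF lc(1) nz] by simp
  qed
  have "A1 p = A2 p" if p: "p \<in> points d" for p
  proof -
    have sa: "surj a1" using a1 by (auto simp: field_aut_def bij_def)
    define q where "q = map (inv a1) p"
    have mq: "map a1 q = p" unfolding q_def using sa by (induction p) (auto simp: surj_f_inv_f)
    have "q \<in> points d" using p by (simp add: q_def)
    hence "A1 (map a1 q) = A2 (map a2 q)" using E by blast
    thus ?thesis using mq aa by simp
  qed
  thus ?thesis using aa by blast
qed

lemma field_aut_inv:
  assumes a: "field_aut le a"
  shows "field_aut le (inv a)"
proof -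
  have b: "bij a" and add: "\<forall>x y. a (x + y) = a x + a y" and mul: "\<forall>x y. a (x * y) = a x * a y"
    and z: "a 0 = 0" and o: "a 1 = 1" and ord: "\<forall>r. le = Some r \<longrightarrow> (\<forall>x y. r x y \<longleftrightarrow> r (a x) (a y))"
    using a by (auto simp: field_aut_def)
  have ia: "inv a (a x) = x" for x using b by (simp add: bij_def inv_f_f)
  have ai: "a (inv a x) = x" for x using b by (simp add: bij_def surj_f_inv_f)
  have "inv a (x + y) = inv a x + inv a y" for x y
  proof -
    have "a (inv a x + inv a y) = x + y" using add ai by simp
    hence "inv a (x + y) = inv a (a (inv a x + inv a y))" by simp
    thus ?thesis using ia by simp
  qed
  moreover have "inv a (x * y) = inv a x * inv a y" for x y
  proof -
    have "a (inv a x * inv a y) = x * y" using mul ai by simp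
    hence "inv a (x * y) = inv a (a (inv a x * inv a y))" by simp
    thus ?thesis using ia by simp
  qed
  moreover have "inv a 0 = 0" using ia[of 0] z by simp
  moreover have "inv a 1 = 1" using ia[of 1] o by simp
  moreover have "bij (inv a)" using b by (rule bij_imp_bij_inv)
  moreover have "\<forall>r. le = Some r \<longrightarrow> (\<forall>x y. r x y \<longleftrightarrow> r (inv a x) (inv a y))"
  proof (intro allI impI)
    fix r x y assume "le = Some r"
    hence "r (inv a x) (inv a y) \<longleftrightarrow> r (a (inv a x)) (a (inv a y))" using ord by blast
    thus "r x y \<longleftrightarrow> r (inv a x) (inv a y)" using ai by simp
  qed
  ultimately show ?thesis by (simp add: field_aut_def)
qed

lemma field_aut_map_bij:
  assumes a: "field_aut le (a :: 'a::field \<Rightarrow> 'a)"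
  shows "bij_betw (map a) (points d :: 'a list set) (points d)"
proof -
  have b: "bij a" using a by (simp add: field_aut_def)
  have "inj (map a)" using b by (simp add: bij_def inj_mapI)
  moreover have "map a ` points d = points d"
  proof
    show "map a ` points d \<subseteq> points d" by auto
  next
    show "points d \<subseteq> map a ` points d"
    proof
      fix y :: "'a list" assume y: "y \<in> points d"
      have e1: "map a (map (inv a) y) = y" using b by (induction y) (auto simp: bij_def surj_f_inv_f)
      have e2: "map (inv a) y \<in> points d" using y by simp
      show "y \<in> map a ` points d" by (rule image_eqI[of y "map a" "map (inv a) y"]) (use e1 e2 in auto)
    qed
  qed
  ultimately show ?thesis by (simp add: bij_betw_def inj_on_def inj_def)
qed

lemma geom_aut_comp:
  assumes fd: "field_definable_geom le d ar rel" and A: "geom_aut d ar rel A" and a: "field_aut le a"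
    and g: "\<forall>p\<in>points d. g p = A (map a p)"
  shows "geom_aut d ar rel g"
proof -
  have b1: "bij_betw (map a) (points d) (points d)" by (rule field_aut_map_bij[OF a])
  have b2: "bij_betw A (points d) (points d)" using A by (simp add: geom_aut_def)
  have "bij_betw (A \<circ> map a) (points d) (points d)" by (rule bij_betw_trans[OF b1 b2])
  hence bg: "bij_betw g (points d) (points d)"
    using bij_betw_cong[of "points d" g "A \<circ> map a" "points d"] g by simp
  have P: "\<forall>i ps. length ps = ar i \<and> set ps \<subseteq> points d \<longrightarrow> (rel i ps \<longleftrightarrow> rel i (map A ps))"
    using A by (simp add: geom_aut_def)
  have "rel i ps \<longleftrightarrow> rel i (map g ps)" if ps: "length ps = ar i" "set ps \<subseteq> points d" for i ps
  proof -
    have "map g ps = map (A \<circ> map a) ps" using g ps(2) by (intro map_cong) auto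
    hence e1: "map g ps = map A (map (map a) ps)" by simp
    have "set (map (map a) ps) \<subseteq> points d" using ps(2) by auto
    hence e2: "rel i (map (map a) ps) \<longleftrightarrow> rel i (map A (map (map a) ps))"
      using P[rule_format, of "map (map a) ps" i] ps(1) by simp
    have e3: "rel i (map (map a) ps) \<longleftrightarrow> rel i ps"
    proof -
      have "\<forall>p\<in>set ps. length p = d" using ps(2) by auto
      from def_rel_aut[OF fd a ps(1) this] show ?thesis .
    qed
    show ?thesis unfolding e1 using e2 e3 by blast
  qed
  thus ?thesis using bg by (simp add: geom_aut_def)
qed


lemma exists_r0:
  fixes le :: "('a::field \<Rightarrow> 'a \<Rightarrow> bool) option"
  assumes "case le of Some r \<Rightarrow> ordered_field_rel r
                  | None \<Rightarrow> (\<exists>x y z :: 'a. x \<noteq> y \<and> y \<noteq> z \<and> x \<noteq> z)"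
  shows "\<exists>r0::'a. r0 \<noteq> 0 \<and> r0 \<noteq> 1"
proof (cases le)
  case None
  then obtain x y z :: 'a where "x \<noteq> y" "y \<noteq> z" "x \<noteq> z" using assms by auto
  hence "(x \<noteq> 0 \<and> x \<noteq> 1) \<or> (y \<noteq> 0 \<and> y \<noteq> 1) \<or> (z \<noteq> 0 \<and> z \<noteq> 1)" by auto
  thus ?thesis by blast
next
  case (Some r)
  hence ofr: "ordered_field_rel r" using assms by simp
  have "(1::'a) + 1 \<noteq> 0"
  proof
    assume "(1::'a) + 1 = 0"
    moreover have "r (0 + 1) (1 + 1)" using O_add[OF ofr O_01[OF ofr]] .
    ultimately have "r 1 0" by simp
    thus False using O_10[OF ofr] by simp
  qed
  moreover have "(1::'a) + 1 \<noteq> 1"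
  proof
    assume "(1::'a) + 1 = 1"
    hence "(1::'a) + 1 = 1 + 0" by (simp only: add_0_right)
    hence "(1::'a) = 0" by (rule add_left_imp_eq)
    thus False by simp
  qed
  ultimately show ?thesis by blast
qed

lemma prop_fwd:
  fixes le :: "('a::field \<Rightarrow> 'a \<Rightarrow> bool) option"
    and d :: nat and ar :: "'i \<Rightarrow> nat" and rel :: "'i \<Rightarrow> 'a list list \<Rightarrow> bool"
  assumes d2: "d \<ge> 2"
    and cs: "case le of Some r \<Rightarrow> ordered_field_rel r
                  | None \<Rightarrow> (\<exists>x y z :: 'a. x \<noteq> y \<and> y \<noteq> z \<and> x \<noteq> z)"
    and cg: "coord_geom le d ar rel"
    and fd: "field_definable_geom le d ar rel"
    and ga: "geom_aut d ar rel g"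
  shows "\<exists>A \<alpha>. aff_aut d ar rel A \<and> field_aut le \<alpha> \<and> (\<forall>p\<in>points d. g p = (A \<circ> ind_map \<alpha>) p)"
proof -
  obtain r0 :: 'a where r0: "r0 \<noteq> 0" "r0 \<noteq> 1" using exists_r0[OF cs] by blast
  have bj: "bij_betw g (points d) (points d)" using ga by (simp add: geom_aut_def)
  have gL: "length (g x) = d" if "length x = d" for x using bj that by (auto simp: bij_betw_def)
  have colp: "Col (g p) (g q) (g w) \<longleftrightarrow> Col p q w"
    if L: "length p = d" "length q = d" "length w = d" for p q w
  proof (cases le)
    case None
    hence "geom_definable3 d ar rel Col" using cg by (simp add: coord_geom_def)
    from geom_def3_aut[OF this ga L] show ?thesis .
  next
    case (Some r)
    hence ofr: "ordered_field_rel r" using cs by simp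
    have "geom_definable3 d ar rel (Bw r)" using cg Some by (simp add: coord_geom_def)
    note bw = geom_def3_aut[OF this ga]
    have "Col (g p) (g q) (g w) \<longleftrightarrow> Bw r (g p) (g q) (g w) \<or> Bw r (g q) (g p) (g w) \<or> Bw r (g p) (g w) (g q)"
      using Col_Bw[OF ofr gL[OF L(1)] gL[OF L(2)] gL[OF L(3)]] .
    also have "\<dots> \<longleftrightarrow> Bw r p q w \<or> Bw r q p w \<or> Bw r p w q"
      using bw[OF L] bw[OF L(2,1,3)] bw[OF L(1,3,2)] by simp
    also have "\<dots> \<longleftrightarrow> Col p q w" using Col_Bw[OF ofr L] by simp
    finally show ?thesis .
  qed
  have loc: "collin d g r0"
    by (rule collin.intro[OF d2 bj colp r0])
  interpret C: collin d g r0 by (rule loc)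
  have fa: "field_aut le C.alpha"
  proof (cases le)
    case None thus ?thesis using C.alpha_aut by simp
  next
    case (Some r)
    hence ofr: "ordered_field_rel r" using cs by simp
    have "geom_definable3 d ar rel (Bw r)" using cg Some by (simp add: coord_geom_def)
    note bw = geom_def3_aut[OF this ga]
    have ord: "\<forall>x y. r x y \<longleftrightarrow> r (C.alpha x) (C.alpha y)"
      by (intro allI) (rule C.alpha_order[OF ofr bw])
    have o2: "\<forall>r'. le = Some r' \<longrightarrow> (\<forall>x y. r' x y \<longleftrightarrow> r' (C.alpha x) (C.alpha y))"
    proof (intro allI impI)
      fix r' x y assume "le = Some r'"
      hence "r' = r" using Some by simp
      thus "r' x y \<longleftrightarrow> r' (C.alpha x) (C.alpha y)" using ord[rule_format, of x y] by (simp only:)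
    qed
    show ?thesis unfolding field_aut_def
    proof (intro conjI)
      show "bij C.alpha" using C.alpha_inj C.alpha_surj by (simp add: bij_def)
      show "\<forall>x y. C.alpha (x + y) = C.alpha x + C.alpha y" using C.alpha_add by blast
      show "\<forall>x y. C.alpha (x * y) = C.alpha x * C.alpha y" using C.alpha_mult by blast
      show "C.alpha 0 = 0" by (rule C.alpha_0)
      show "C.alpha 1 = 1" by (rule C.alpha_1)
      show "\<forall>r'. le = Some r' \<longrightarrow> (\<forall>x y. r' x y \<longleftrightarrow> r' (C.alpha x) (C.alpha y))" by (rule o2)
    qed
  qed
  define A where "A p = padd (mat_vec d C.Mh p) (g (zv d))" for p
  have gA: "\<forall>p\<in>points d. g p = A (map C.alpha p)"
  proof
    fix p :: "'a list" assume "p \<in> points d"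
    hence "g p = padd (mat_vec d C.Mh (map C.alpha p)) (g (zv d))" using C.g_rep[of p] by simp
    thus "g p = A (map C.alpha p)" by (simp only: A_def)
  qed
  have aff: "affine_transf d A" unfolding affine_transf_def
  proof (intro exI conjI)
    show "g (zv d) \<in> points d" using gL[of "zv d"] by simp
    show "invertible_mat d C.Mh" by (rule C.Mh_inv)
    show "\<forall>p\<in>points d. A p = padd (mat_vec d C.Mh p) (g (zv d))" by (simp add: A_def)
  qed
  have ia: "field_aut le (inv C.alpha)" using field_aut_inv[OF fa] .
  have ai: "map C.alpha (map (inv C.alpha) p) = p" for p
    using C.alpha_surj by (induction p) (auto simp: surj_f_inv_f)
  have Ag: "\<forall>p\<in>points d. A p = g (map (inv C.alpha) p)"
  proof
    fix p :: "'a list" assume "p \<in> points d"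
    hence "map (inv C.alpha) p \<in> points d" by simp
    hence "g (map (inv C.alpha) p) = A (map C.alpha (map (inv C.alpha) p))" using gA by blast
    thus "A p = g (map (inv C.alpha) p)" using ai by simp
  qed
  have "geom_aut d ar rel A" by (rule geom_aut_comp[OF fd ga ia Ag])
  hence "aff_aut d ar rel A" using aff by (simp add: aff_aut_def)
  moreover have "\<forall>p\<in>points d. g p = (A \<circ> ind_map C.alpha) p" using gA by (simp add: ind_map_def)
  ultimately show ?thesis using fa by blast
qed

theorem proposition4:
  fixes le :: "('a::field \<Rightarrow> 'a \<Rightarrow> bool) option"
    and d :: nat and ar :: "'i \<Rightarrow> nat" and rel :: "'i \<Rightarrow> 'a list list \<Rightarrow> bool"
  assumes "d \<ge> 2"
    and "case le of Some r \<Rightarrow> ordered_field_rel r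
                  | None \<Rightarrow> (\<exists>x y z :: 'a. x \<noteq> y \<and> y \<noteq> z \<and> x \<noteq> z)"
    and "coord_geom le d ar rel"
    and "field_definable_geom le d ar rel"
  shows "(\<forall>g. geom_aut d ar rel g \<longleftrightarrow>
            (\<exists>A \<alpha>. aff_aut d ar rel A \<and> field_aut le \<alpha> \<and>
                   (\<forall>p\<in>points d. g p = (A \<circ> ind_map \<alpha>) p))) \<and>
         (\<forall>g A \<alpha> A' \<alpha>'.
            geom_aut d ar rel g \<and>
            aff_aut d ar rel A \<and> field_aut le \<alpha> \<and> (\<forall>p\<in>points d. g p = (A \<circ> ind_map \<alpha>) p) \<and>
            aff_aut d ar rel A' \<and> field_aut le \<alpha>' \<and> (\<forall>p\<in>points d. g p = (A' \<circ> ind_map \<alpha>') p)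
            \<longrightarrow> \<alpha> = \<alpha>' \<and> (\<forall>p\<in>points d. A p = A' p))"
proof -
  have fwd: "\<exists>A \<alpha>. aff_aut d ar rel A \<and> field_aut le \<alpha> \<and> (\<forall>p\<in>points d. g p = (A \<circ> ind_map \<alpha>) p)"
    if ga: "geom_aut d ar rel g" for g
    by (rule prop_fwd[OF assms ga])
  have bwd: "geom_aut d ar rel g"
    if "\<exists>A \<alpha>. aff_aut d ar rel A \<and> field_aut le \<alpha> \<and> (\<forall>p\<in>points d. g p = (A \<circ> ind_map \<alpha>) p)" for g
  proof -
    from that obtain A \<alpha> where A: "aff_aut d ar rel A" "field_aut le \<alpha>"
      "\<forall>p\<in>points d. g p = (A \<circ> ind_map \<alpha>) p" by blast
    have gA: "geom_aut d ar rel A" using A(1) by (simp add: aff_aut_def)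
    have gg: "\<forall>p\<in>points d. g p = A (map \<alpha> p)" using A(3) by (simp add: ind_map_def)
    show ?thesis by (rule geom_aut_comp[OF assms(4) gA A(2) gg])
  qed
  have uniq: "\<alpha> = \<alpha>' \<and> (\<forall>p\<in>points d. A p = A' p)"
    if H: "geom_aut d ar rel g \<and>
            aff_aut d ar rel A \<and> field_aut le \<alpha> \<and> (\<forall>p\<in>points d. g p = (A \<circ> ind_map \<alpha>) p) \<and>
            aff_aut d ar rel A' \<and> field_aut le \<alpha>' \<and> (\<forall>p\<in>points d. g p = (A' \<circ> ind_map \<alpha>') p)"
    for g A \<alpha> A' \<alpha>'
  proof -
    from H have HA: "aff_aut d ar rel A" and Ha: "field_aut le \<alpha>" and Hg: "\<forall>p\<in>points d. g p = (A \<circ> ind_map \<alpha>) p"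
      and HA': "aff_aut d ar rel A'" and Ha': "field_aut le \<alpha>'" and Hg': "\<forall>p\<in>points d. g p = (A' \<circ> ind_map \<alpha>') p"
      by auto
    obtain M b where M: "b \<in> points d" "invertible_mat d M" "\<forall>p\<in>points d. A p = padd (mat_vec d M p) b"
      using HA by (auto simp: aff_aut_def affine_transf_def)
    obtain M' b' where M': "b' \<in> points d" "invertible_mat d M'" "\<forall>p\<in>points d. A' p = padd (mat_vec d M' p) b'"
      using HA' by (auto simp: aff_aut_def affine_transf_def)
    have E: "\<forall>p\<in>points d. A (map \<alpha> p) = A' (map \<alpha>' p)"
    proof
      fix p :: "'a list" assume "p \<in> points d"
      hence "g p = A (map \<alpha> p)" "g p = A' (map \<alpha>' p)" using Hg Hg' by (auto simp: ind_map_def)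
      thus "A (map \<alpha> p) = A' (map \<alpha>' p)" by simp
    qed
    have d0: "0 < d" using assms(1) by simp
    have lb: "length b = d" "length b' = d" using M(1) M'(1) by auto
    show ?thesis by (rule uniqueness[OF d0 Ha Ha' M(2) lb(1) M(3) M'(2) lb(2) M'(3) E])
  qed
  show ?thesis
  proof (intro conjI allI impI iffI)
    fix g assume "geom_aut d ar rel g"
    thus "\<exists>A \<alpha>. aff_aut d ar rel A \<and> field_aut le \<alpha> \<and> (\<forall>p\<in>points d. g p = (A \<circ> ind_map \<alpha>) p)"
      by (rule fwd)
  next
    fix g assume "\<exists>A \<alpha>. aff_aut d ar rel A \<and> field_aut le \<alpha> \<and> (\<forall>p\<in>points d. g p = (A \<circ> ind_map \<alpha>) p)"
    thus "geom_aut d ar rel g" by (rule bwd)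
  next
    fix g A \<alpha> A' \<alpha>'
    assume "geom_aut d ar rel g \<and>
            aff_aut d ar rel A \<and> field_aut le \<alpha> \<and> (\<forall>p\<in>points d. g p = (A \<circ> ind_map \<alpha>) p) \<and>
            aff_aut d ar rel A' \<and> field_aut le \<alpha>' \<and> (\<forall>p\<in>points d. g p = (A' \<circ> ind_map \<alpha>') p)"
    from uniq[OF this] show "\<alpha> = \<alpha>'" by blast
  next
    fix g A \<alpha> A' \<alpha>'
    assume "geom_aut d ar rel g \<and>
            aff_aut d ar rel A \<and> field_aut le \<alpha> \<and> (\<forall>p\<in>points d. g p = (A \<circ> ind_map \<alpha>) p) \<and>
            aff_aut d ar rel A' \<and> field_aut le \<alpha>' \<and> (\<forall>p\<in>points d. g p = (A' \<circ> ind_map \<alpha>') p)"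
    from uniq[OF this] show "\<forall>p\<in>points d. A p = A' p" by blast
  qed
qed

end
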